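(* Let $f,h_1,\dots,h_p\colon\mathbb R^n\times\mathbb R^m\to\mathbb R$ be continuously differentiable, $I=\{1,\dots,\ell\}$, $J=\{\ell+1,\dots,p\}$, $\Gamma(x):=\{y\mid h_i(x,y)\le0\ (i\in I),\ h_i(x,y)=0\ (i\in J)\}$, $\varphi(x):=\inf\{f(x,y)\mid y\in\Gamma(x)\}$, $S(x):=\operatorname{argmin}\{f(x,y)\mid y\in\Gamma(x)\}$, $h_0(x,y):=f(x,y)-\varphi(x)$. Fix $\bar x\in\operatorname{dom}\Gamma$. Assume (A1'): for each $x$, $f(x,\cdot)$ and $h_i(x,\cdot)$, $i\in I$, are convex and $h_i(x,\cdot)$, $i\in J$, are affine; (A2): $\Gamma$ is locally bounded at $\bar x$; and RCPLD$_S$ with respect to $\operatorname{dom}\Gamma$ holds at each point of $\{\bar x\}\times S(\bar x)$. Then $S$ is lower semicontinuous at $\bar x$ with respect to $\operatorname{dom}S$.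
   Context: $\operatorname{dom}\Gamma:=\{x\mid\Gamma(x)\neq\emptyset\}$, similarly $\operatorname{dom}S$; $\inf\emptyset=+\infty$. $\Gamma$ is locally bounded at $\bar x$ if there are a bounded $B$ and a neighborhood $V$ of $\bar x$ with $\Gamma(x)\subset B$ for $x\in V$. $S$ is lower semicontinuous at $\bar x$ with respect to $\Omega$ if for each open $O$ with $S(\bar x)\cap O\neq\emptyset$ there is a neighborhood $V$ of $\bar x$ with $S(x)\cap O\neq\emptyset$ for all $x\in V\cap\Omega$. A pair of finite families $((a^i)_{i\in I_1},(b^i)_{i\in I_2})$ is positive-linearly dependent if there are $\alpha_i\ge0$, $\beta_i$, not all zero, with $\sum\alpha_ia^i+\sum\beta_ib^i=0$. For $(\bar x,\bar y)\in\operatorname{gph}S$ let $I(\bar x,\bar y):=\{i\in I\mid h_i(\bar x,\bar y)=0\}$ and $\nabla_yh_0:=\nabla_yf$. RCPLD$_S$ holds at $(\bar x,\bar y)$ with respect to $\Omega$ if there are a neighborhood $U$ of $(\bar x,\bar y)$ and $\mathcal S\subset J$ such that: (i) $\{\nabla_yh_i(\bar x,\bar y)\mid i\in\mathcal S\}$ is a basis of the span of $\{\nabla_yh_i(\bar x,\bar y)\mid i\in J\}$; (ii) $(\nabla_yh_i(x,y))_{i\in J}$ has constant rank on $U\cap(\Omega\times\mathbb R^m)$; (iii) for each $K\subset\{0\}\cup I(\bar x,\bar y)$ with $((\nabla_yh_i(\bar x,\bar y))_{i\in K},(\nabla_yh_i(\bar x,\bar y))_{i\in\mathcal S})$ positive-linearly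 dependent, $(\nabla_yh_i(x,y))_{i\in K\cup\mathcal S}$ is linearly dependent for each $(x,y)\in U\cap(\Omega\times\mathbb R^m)$. *)

theory Defs
  imports "HOL-Analysis.Analysis"
begin

definition C1_fun :: "('c::euclidean_space \<Rightarrow> real) \<Rightarrow> bool" where
  "C1_fun g \<longleftrightarrow> (\<exists>G. continuous_on UNIV G \<and> (\<forall>z. (g has_derivative (\<lambda>v. G z \<bullet> v)) (at z)))"

definition grad_y :: "('a \<Rightarrow> 'b::euclidean_space \<Rightarrow> real) \<Rightarrow> 'a \<Rightarrow> 'b \<Rightarrow> 'b" where
  "grad_y g x y = (THE v. (g x has_derivative (\<lambda>w. v \<bullet> w)) (at y))"

text \<open>Gradient of h_i w.r.t. y, with the convention that index 0 stands for h_0 = f - phi,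
  whose y-gradient is the y-gradient of f.\<close>
definition G_y :: "('a \<Rightarrow> 'b::euclidean_space \<Rightarrow> real) \<Rightarrow> (nat \<Rightarrow> 'a \<Rightarrow> 'b \<Rightarrow> real) \<Rightarrow> nat \<Rightarrow> 'a \<Rightarrow> 'b \<Rightarrow> 'b" where
  "G_y f h i x y = (if i = 0 then grad_y f x y else grad_y (h i) x y)"

definition Gamma :: "(nat \<Rightarrow> 'a \<Rightarrow> 'b \<Rightarrow> real) \<Rightarrow> nat \<Rightarrow> nat \<Rightarrow> 'a \<Rightarrow> 'b set" where
  "Gamma h l p x = {y. (\<forall>i\<in>{1..l}. h i x y \<le> 0) \<and> (\<forall>i\<in>{l+1..p}. h i x y = 0)}"

text \<open>Optimal value function (inf over the empty set is +infinity).\<close>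
definition phi :: "('a \<Rightarrow> 'b \<Rightarrow> real) \<Rightarrow> (nat \<Rightarrow> 'a \<Rightarrow> 'b \<Rightarrow> real) \<Rightarrow> nat \<Rightarrow> nat \<Rightarrow> 'a \<Rightarrow> ereal" where
  "phi f h l p x = (INF y\<in>Gamma h l p x. ereal (f x y))"

definition Sol :: "('a \<Rightarrow> 'b \<Rightarrow> real) \<Rightarrow> (nat \<Rightarrow> 'a \<Rightarrow> 'b \<Rightarrow> real) \<Rightarrow> nat \<Rightarrow> nat \<Rightarrow> 'a \<Rightarrow> 'b set" where
  "Sol f h l p x = {y \<in> Gamma h l p x. ereal (f x y) = phi f h l p x}"

definition dom_map :: "('a \<Rightarrow> 'b set) \<Rightarrow> 'a set" where
  "dom_map M = {x. M x \<noteq> {}}"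

definition locally_bounded_at :: "('a::topological_space \<Rightarrow> 'b::metric_space set) \<Rightarrow> 'a \<Rightarrow> bool" where
  "locally_bounded_at M xb \<longleftrightarrow> (\<exists>B V. bounded B \<and> open V \<and> xb \<in> V \<and> (\<forall>x\<in>V. M x \<subseteq> B))"

definition lsc_wrt :: "('a::topological_space \<Rightarrow> 'b::topological_space set) \<Rightarrow> 'a \<Rightarrow> 'a set \<Rightarrow> bool" where
  "lsc_wrt M xb \<Omega> \<longleftrightarrow> (\<forall>W. open W \<and> M xb \<inter> W \<noteq> {} \<longrightarrow>
      (\<exists>V. open V \<and> xb \<in> V \<and> (\<forall>x\<in>V \<inter> \<Omega>. M x \<inter> W \<noteq> {})))"

definition pos_lin_dep :: "('i \<Rightarrow> 'v::real_vector) \<Rightarrow> 'i set \<Rightarrow> ('j \<Rightarrow> 'v) \<Rightarrow> 'j set \<Rightarrow> bool" where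
  "pos_lin_dep a K1 b K2 \<longleftrightarrow> (\<exists>\<alpha> \<beta>. (\<forall>i\<in>K1. \<alpha> i \<ge> 0) \<and> ((\<exists>i\<in>K1. \<alpha> i \<noteq> 0) \<or> (\<exists>i\<in>K2. \<beta> i \<noteq> 0)) \<and>
      (\<Sum>i\<in>K1. \<alpha> i *\<^sub>R a i) + (\<Sum>i\<in>K2. \<beta> i *\<^sub>R b i) = 0)"

definition fam_lin_dep :: "('i \<Rightarrow> 'v::real_vector) \<Rightarrow> 'i set \<Rightarrow> bool" where
  "fam_lin_dep v K \<longleftrightarrow> (\<exists>c. (\<exists>i\<in>K. c i \<noteq> 0) \<and> (\<Sum>i\<in>K. c i *\<^sub>R v i) = 0)"

definition RCPLD_S :: "('a::euclidean_space \<Rightarrow> 'b::euclidean_space \<Rightarrow> real) \<Rightarrow> (nat \<Rightarrow> 'a \<Rightarrow> 'b \<Rightarrow> real)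
    \<Rightarrow> nat \<Rightarrow> nat \<Rightarrow> 'a set \<Rightarrow> 'a \<Rightarrow> 'b \<Rightarrow> bool" where
  "RCPLD_S f h l p \<Omega> xb yb \<longleftrightarrow>
    (\<exists>U \<S>. open U \<and> (xb, yb) \<in> U \<and> \<S> \<subseteq> {l+1..p} \<and>
      \<not> fam_lin_dep (\<lambda>i. G_y f h i xb yb) \<S> \<and>
      span ((\<lambda>i. G_y f h i xb yb) ` \<S>) = span ((\<lambda>i. G_y f h i xb yb) ` {l+1..p}) \<and>
      (\<exists>r. \<forall>(x, y) \<in> U \<inter> (\<Omega> \<times> UNIV). dim ((\<lambda>i. G_y f h i x y) ` {l+1..p}) = r) \<and>
      (\<forall>K. K \<subseteq> {0} \<union> {i\<in>{1..l}. h i xb yb = 0} \<longrightarrow>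
          pos_lin_dep (\<lambda>i. G_y f h i xb yb) K (\<lambda>i. G_y f h i xb yb) \<S> \<longrightarrow>
          (\<forall>(x, y) \<in> U \<inter> (\<Omega> \<times> UNIV). fam_lin_dep (\<lambda>i. G_y f h i x y) (K \<union> \<S>))))"

end

theory Submission
  imports Defs
begin


lemma finite_coord_subseq:
  fixes c :: "nat \<Rightarrow> 'i \<Rightarrow> real"
  assumes "finite T" "\<forall>n. \<forall>i\<in>T. \<bar>c n i\<bar> \<le> B"
  shows "\<exists>r L. strict_mono r \<and> (\<forall>i\<in>T. (\<lambda>n. c (r n) i) \<longlonglongrightarrow> L i)"
  using assms
proof (induction T rule: finite_induct)
  case empty
  then show ?case by (intro exI[of _ id]) (auto simp: strict_mono_def)
next
  case (insert j T)
  then obtain r L where r: "strict_mono r" and L: "\<forall>i\<in>T. (\<lambda>n. c (r n) i) \<longlonglongrightarrow> L i"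
    by auto
  have "bounded (range (\<lambda>n. c (r n) j))"
    using insert.prems unfolding bounded_real by auto
  then obtain l s where s: "strict_mono s" and l: "((\<lambda>n. c (r n) j) \<circ> s) \<longlonglongrightarrow> l"
    using bounded_imp_convergent_subsequence by blast
  show ?case
  proof (intro exI conjI)
    show "strict_mono (r \<circ> s)" using r s by (rule strict_mono_o)
    show "\<forall>i\<in>insert j T. (\<lambda>n. c ((r \<circ> s) n) i) \<longlonglongrightarrow> (L(j:=l)) i"
    proof
      fix i assume "i \<in> insert j T"
      show "(\<lambda>n. c ((r \<circ> s) n) i) \<longlonglongrightarrow> (L(j:=l)) i"
      proof (cases "i = j")
        case True then show ?thesis using l by (simp add: o_def)
      next
        case False
        then have "i \<in> T" using \<open>i \<in> insert j T\<close> by auto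
        then have "(\<lambda>n. c (r n) i) \<longlonglongrightarrow> L i" using L by auto
        from LIMSEQ_subseq_LIMSEQ[OF this s] show ?thesis using False by (simp add: o_def)
      qed
    qed
  qed
qed

lemma finite_coord_subseq_ev:
  fixes c :: "nat \<Rightarrow> 'i \<Rightarrow> real"
  assumes "finite T" "eventually (\<lambda>n. \<forall>i\<in>T. \<bar>c n i\<bar> \<le> B) sequentially"
  shows "\<exists>r L. strict_mono r \<and> (\<forall>i\<in>T. (\<lambda>n. c (r n) i) \<longlonglongrightarrow> L i)"
proof -
  obtain N where N: "\<forall>n\<ge>N. \<forall>i\<in>T. \<bar>c n i\<bar> \<le> B" using assms(2) by (auto simp: eventually_sequentially)
  have "\<forall>n. \<forall>i\<in>T. \<bar>c (n+N) i\<bar> \<le> B" using N by auto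
  from finite_coord_subseq[OF assms(1) this] obtain r L where
    r: "strict_mono r" and L: "\<forall>i\<in>T. (\<lambda>n. c (r n + N) i) \<longlonglongrightarrow> L i" by auto
  have "strict_mono (\<lambda>n. r n + N)" using r by (auto simp: strict_mono_def)
  then show ?thesis using L by blast
qed

lemma deriv_lb:
  fixes Q :: "real \<Rightarrow> real"
  assumes "(Q has_real_derivative D) (at 0)"
    and "eventually (\<lambda>t. C * t \<le> Q t - Q 0) (at_right 0)"
  shows "C \<le> D"
proof -
  have "((\<lambda>t. (Q t - Q 0) / (t - 0)) \<longlongrightarrow> D) (at 0)"
    using assms(1) by (simp add: has_field_derivative_iff)
  then have lim: "((\<lambda>t. (Q t - Q 0) / t) \<longlongrightarrow> D) (at_right 0)"
    by (simp add: filterlim_at_split)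
  have "eventually (\<lambda>t. C \<le> (Q t - Q 0) / t) (at_right 0)"
    using assms(2) eventually_at_right_less[of 0]
    by eventually_elim (simp add: pos_le_divide_eq)
  then show ?thesis
    using tendsto_lowerbound[OF lim] by (simp add: trivial_limit_at_right_real)
qed

lemma deriv_ub:
  fixes Q :: "real \<Rightarrow> real"
  assumes "(Q has_real_derivative D) (at 0)"
    and "eventually (\<lambda>t. Q t - Q 0 \<le> C * t) (at_right 0)"
  shows "D \<le> C"
proof -
  have "((\<lambda>t. (Q t - Q 0) / (t - 0)) \<longlongrightarrow> D) (at 0)"
    using assms(1) by (simp add: has_field_derivative_iff)
  then have lim: "((\<lambda>t. (Q t - Q 0) / t) \<longlongrightarrow> D) (at_right 0)"
    by (simp add: filterlim_at_split)
  have "eventually (\<lambda>t. (Q t - Q 0) / t \<le> C) (at_right 0)"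
    using assms(2) eventually_at_right_less[of 0]
    by eventually_elim (simp add: pos_divide_le_eq)
  then show ?thesis
    using tendsto_upperbound[OF lim] by (simp add: trivial_limit_at_right_real)
qed

lemma inner_fun_eq:
  fixes a b :: "'b::real_inner"
  assumes "(\<lambda>w. a \<bullet> w) = (\<lambda>w. b \<bullet> w)"
  shows "a = b"
proof -
  have "a \<bullet> (a - b) = b \<bullet> (a - b)" using assms by metis
  then have "(a - b) \<bullet> (a - b) = 0" by (simp add: inner_diff_left)
  then show ?thesis by simp
qed

lemma convex_grad_ineq:
  fixes g :: "'b::real_normed_vector \<Rightarrow> real"
  assumes cv: "convex_on UNIV g" and d: "(g has_derivative (\<lambda>w. g' w)) (at z)"
  shows "g z + g' (p - z) \<le> g p"
proof -
  let ?Q = "\<lambda>t. g (z + t *\<^sub>R (p - z))"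
  have lin: "linear g'" using d has_derivative_linear by blast
  have "((\<lambda>t. z + t *\<^sub>R (p - z)) has_derivative (\<lambda>t. t *\<^sub>R (p - z))) (at 0)"
    by (auto intro!: derivative_eq_intros)
  then have "(?Q has_derivative (\<lambda>t. g' (t *\<^sub>R (p - z)))) (at 0)"
    using has_derivative_compose[of "\<lambda>t. z + t *\<^sub>R (p - z)" _ 0 UNIV g g'] d by (simp add: o_def)
  then have "(?Q has_derivative (\<lambda>t. t * g' (p - z))) (at 0)"
    using linear_scale[OF lin] by (simp add: linear_cmul[OF lin])
  then have "(?Q has_derivative (\<lambda>t. g' (p - z) * t)) (at 0)"
    by (simp add: mult.commute)
  then have D: "(?Q has_real_derivative g' (p - z)) (at 0)"
    by (simp add: has_field_derivative_def)
  have ev01: "eventually (\<lambda>t. 0 < t \<and> t < (1::real)) (at_right 0)"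
    by (rule eventually_at_rightI[of 0 1]) auto
  have "eventually (\<lambda>t. ?Q t - ?Q 0 \<le> (g p - g z) * t) (at_right 0)"
    using ev01
  proof (eventually_elim)
    case (elim t)
    then have t: "0 < t" "t < 1" by auto
    have "z + t *\<^sub>R (p - z) = (1 - t) *\<^sub>R z + t *\<^sub>R p" by (simp add: algebra_simps)
    moreover have "g ((1 - t) *\<^sub>R z + t *\<^sub>R p) \<le> (1 - t) * g z + t * g p"
      using cv t by (intro convex_onD) auto
    ultimately show ?case by (simp add: algebra_simps)
  qed
  from deriv_ub[OF D this] show ?thesis by simp
qed




lemma C1_partial:
  fixes F :: "'a::euclidean_space \<Rightarrow> 'b::euclidean_space \<Rightarrow> real"
  assumes "C1_fun (\<lambda>z. F (fst z) (snd z))"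
  shows C1_partial_deriv: "\<And>x y. (F x has_derivative (\<lambda>w. grad_y F x y \<bullet> w)) (at y)"
    and C1_partial_cont: "continuous_on UNIV (\<lambda>z. grad_y F (fst z) (snd z))"
    and C1_partial_fcont: "continuous_on UNIV (\<lambda>z. F (fst z) (snd z))"
proof -
  obtain Gf where cont: "continuous_on UNIV Gf"
    and der: "\<And>z. ((\<lambda>z. F (fst z) (snd z)) has_derivative (\<lambda>v. Gf z \<bullet> v)) (at z)"
    using assms unfolding C1_fun_def by blast
  have D: "(F x has_derivative (\<lambda>w. snd (Gf (x, y)) \<bullet> w)) (at y)" for x y
  proof -
    have d1: "((\<lambda>y. (x, y)) has_derivative (\<lambda>w. (0, w))) (at y)"
      by (auto intro!: derivative_eq_intros)
    have "((\<lambda>y. F x y) has_derivative (\<lambda>w. Gf (x, y) \<bullet> (0, w))) (at y)"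
      using has_derivative_compose[OF d1 der[of "(x, y)"]] by simp
    then show ?thesis by (simp add: inner_prod_def)
  qed
  have G: "grad_y F x y = snd (Gf (x, y))" for x y
    unfolding grad_y_def
  proof (rule the_equality)
    show "(F x has_derivative (\<lambda>w. snd (Gf (x, y)) \<bullet> w)) (at y)" by (rule D)
    fix v assume "(F x has_derivative (\<lambda>w. v \<bullet> w)) (at y)"
    from has_derivative_unique[OF this D] show "v = snd (Gf (x, y))" by (rule inner_fun_eq)
  qed
  show "\<And>x y. (F x has_derivative (\<lambda>w. grad_y F x y \<bullet> w)) (at y)" using D G by simp
  show "continuous_on UNIV (\<lambda>z. grad_y F (fst z) (snd z))"
    using G continuous_on_snd[OF cont] by simp
  show "continuous_on UNIV (\<lambda>z. F (fst z) (snd z))"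
    by (intro continuous_at_imp_continuous_on ballI has_derivative_continuous[OF der])
qed

lemma affine_grad:
  fixes F :: "'a \<Rightarrow> 'b::euclidean_space \<Rightarrow> real"
  assumes "\<forall>y. F x y = a \<bullet> y + b" "(F x has_derivative (\<lambda>w. grad_y F x y \<bullet> w)) (at y)"
  shows "grad_y F x y = a"
proof -
  have "F x = (\<lambda>y. a \<bullet> y + b)" using assms(1) by auto
  then have "(F x has_derivative (\<lambda>w. a \<bullet> w)) (at y)"
    by (auto intro!: derivative_eq_intros)
  from has_derivative_unique[OF assms(2) this] show ?thesis by (rule inner_fun_eq)
qed

lemma not_fld_inj:
  assumes "finite T" "\<not> fam_lin_dep v T"
  shows "inj_on v T"
proof (rule inj_onI, rule ccontr)
  fix i j assume ij: "i \<in> T" "j \<in> T" "v i = v j" "i \<noteq> j"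
  let ?c = "\<lambda>k. if k = i then 1 else if k = j then -1 else (0::real)"
  have "(\<Sum>k\<in>T. ?c k *\<^sub>R v k) = (\<Sum>k\<in>T. (if k = i then v i else 0) - (if k = j then v j else 0))"
    by (rule sum.cong) (use ij in auto)
  also have "\<dots> = (\<Sum>k\<in>T. (if k = i then v i else 0)) - (\<Sum>k\<in>T. (if k = j then v j else 0))"
    by (rule sum_subtractf)
  also have "\<dots> = v i - v j" using ij(1,2) assms(1) by (simp add: sum.delta)
  also have "\<dots> = 0" using ij(3) by simp
  finally have "fam_lin_dep v T" unfolding fam_lin_dep_def using ij by (intro exI[of _ ?c]) auto
  then show False using assms by simp
qed



lemma not_fld_indep:
  assumes "finite T" "\<not> fam_lin_dep v T"
  shows "independent (v ` T)"
proof
  assume dep: "dependent (v ` T)"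
  have fin: "finite (v ` T)" using assms(1) by simp
  obtain u where u1: "\<exists>w\<in>v ` T. u w \<noteq> 0" and u2: "(\<Sum>w\<in>v ` T. u w *\<^sub>R w) = 0"
    using dep unfolding dependent_finite[OF fin] by blast
  have inj: "inj_on v T" using not_fld_inj[OF assms] .
  have "(\<Sum>w\<in>v ` T. u w *\<^sub>R w) = (\<Sum>k\<in>T. u (v k) *\<^sub>R v k)"
    unfolding sum.reindex[OF inj] o_def ..
  then have s0: "(\<Sum>k\<in>T. u (v k) *\<^sub>R v k) = 0" using u2 by simp
  from u1 obtain k where "k \<in> T" "u (v k) \<noteq> 0" by blast
  then have "fam_lin_dep v T" unfolding fam_lin_dep_def using s0 by (intro exI[of _ "\<lambda>k. u (v k)"]) blast
  then show False using assms(2) by simp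
qed


lemma span_fam:
  assumes "finite T" "inj_on v T" "x \<in> span (v ` T)"
  shows "\<exists>lam. x = (\<Sum>t\<in>T. lam t *\<^sub>R v t)"
proof -
  obtain u where "x = (\<Sum>w\<in>v ` T. u w *\<^sub>R w)"
    using assms(3) span_finite[of "v ` T"] assms(1) by auto
  then have "x = (\<Sum>t\<in>T. u (v t) *\<^sub>R v t)" using sum.reindex[OF assms(2), of "\<lambda>w. u w *\<^sub>R w"] by simp
  then show ?thesis by (intro exI[of _ "\<lambda>t. u (v t)"])
qed

lemma sum_in_span: "(\<Sum>t\<in>T. lam t *\<^sub>R v t) \<in> span (v ` T)"
  by (intro span_sum span_mul span_base) auto

lemma inv_Suc_tendsto: "(\<lambda>n. 1 / real (Suc n)) \<longlonglongrightarrow> 0"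
  using LIMSEQ_Suc[OF lim_1_over_n] by simp




lemma unif_indep:
  fixes v :: "'i \<Rightarrow> 'x::metric_space \<Rightarrow> 'b::real_normed_vector"
  assumes T: "finite T" and cont: "\<forall>t\<in>T. continuous (at x0) (v t)"
    and ind: "\<not> fam_lin_dep (\<lambda>t. v t x0) T"
  shows "\<exists>c>0. \<exists>\<eta>>0. \<forall>x lam. dist x x0 < \<eta> \<longrightarrow> c * (\<Sum>t\<in>T. \<bar>lam t\<bar>) \<le> norm (\<Sum>t\<in>T. lam t *\<^sub>R v t x)"
proof (rule ccontr)
  assume H: "\<not> ?thesis"
  have H': "\<forall>c>0. \<forall>\<eta>>0. \<exists>x lam. dist x x0 < \<eta> \<and> norm (\<Sum>t\<in>T. lam t *\<^sub>R v t x) < c * (\<Sum>t\<in>T. \<bar>lam t\<bar>)"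
  proof (intro allI impI)
    fix c \<eta> :: real assume c: "c > 0" and e: "\<eta> > 0"
    show "\<exists>x lam. dist x x0 < \<eta> \<and> norm (\<Sum>t\<in>T. lam t *\<^sub>R v t x) < c * (\<Sum>t\<in>T. \<bar>lam t\<bar>)"
    proof (rule ccontr)
      assume "\<not> ?thesis"
      then have "\<forall>x lam. dist x x0 < \<eta> \<longrightarrow> \<not> (norm (\<Sum>t\<in>T. lam t *\<^sub>R v t x) < c * (\<Sum>t\<in>T. \<bar>lam t\<bar>))"
        by blast
      then show False using H c e unfolding not_less[symmetric] by blast
    qed
  qed
  have ex: "\<forall>n::nat. \<exists>xl. dist (fst xl) x0 < 1 / real (Suc n) \<and> norm (\<Sum>t\<in>T. snd xl t *\<^sub>R v t (fst xl)) < 1 / real (Suc n) * (\<Sum>t\<in>T. \<bar>snd xl t\<bar>)"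
  proof
    fix n :: nat
    have pos: "0 < 1 / real (Suc n)" by simp
    obtain x lam where "dist x x0 < 1 / real (Suc n)" "norm (\<Sum>t\<in>T. lam t *\<^sub>R v t x) < 1 / real (Suc n) * (\<Sum>t\<in>T. \<bar>lam t\<bar>)"
      using H'[rule_format, OF pos pos] by (elim exE conjE) blast
    then show "\<exists>xl. dist (fst xl) x0 < 1 / real (Suc n) \<and> norm (\<Sum>t\<in>T. snd xl t *\<^sub>R v t (fst xl)) < 1 / real (Suc n) * (\<Sum>t\<in>T. \<bar>snd xl t\<bar>)"
      by (intro exI[of _ "(x, lam)"]) simp
  qed
  obtain P where P: "\<forall>n. dist (fst (P n)) x0 < 1 / real (Suc n) \<and> norm (\<Sum>t\<in>T. snd (P n) t *\<^sub>R v t (fst (P n))) < 1 / real (Suc n) * (\<Sum>t\<in>T. \<bar>snd (P n) t\<bar>)"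
    using choice[OF ex] by (elim exE) (rule that)
  define xs where "xs n = fst (P n)" for n
  define lam where "lam n = snd (P n)" for n
  have xs: "\<And>n. dist (xs n) x0 < 1 / real (Suc n)" using P unfolding xs_def by blast
  have lam: "\<And>n. norm (\<Sum>t\<in>T. lam n t *\<^sub>R v t (xs n)) < 1 / real (Suc n) * (\<Sum>t\<in>T. \<bar>lam n t\<bar>)"
    using P unfolding xs_def lam_def by blast
  define S where "S n = (\<Sum>t\<in>T. \<bar>lam n t\<bar>)" for n
  have Spos: "S n > 0" for n
  proof -
    have "S n \<ge> 0" unfolding S_def by (simp add: sum_nonneg)
    moreover have "S n \<noteq> 0"
    proof
      assume "S n = 0"
      then show False using lam[of n] unfolding S_def by simp
    qed
    ultimately show ?thesis by simp
  qed
  define mu where "mu n t = lam n t / S n" for n t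
  have mu1: "(\<Sum>t\<in>T. \<bar>mu n t\<bar>) = 1" for n
    using Spos[of n] unfolding mu_def S_def by (simp add: sum_divide_distrib[symmetric])
  have musmall: "norm (\<Sum>t\<in>T. mu n t *\<^sub>R v t (xs n)) < 1 / real (Suc n)" for n
  proof -
    have "(\<Sum>t\<in>T. mu n t *\<^sub>R v t (xs n)) = (1 / S n) *\<^sub>R (\<Sum>t\<in>T. lam n t *\<^sub>R v t (xs n))"
      unfolding mu_def by (simp add: scaleR_sum_right)
    then have "norm (\<Sum>t\<in>T. mu n t *\<^sub>R v t (xs n)) = norm (\<Sum>t\<in>T. lam n t *\<^sub>R v t (xs n)) / S n"
      using Spos[of n] by simp
    also have "\<dots> < 1 / real (Suc n)"
      using lam[of n] Spos[of n] unfolding S_def by (simp add: divide_less_eq)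
    finally show ?thesis .
  qed
  have "\<forall>n. \<forall>t\<in>T. \<bar>mu n t\<bar> \<le> 1"
  proof (intro allI ballI)
    fix n t assume "t \<in> T"
    have "\<bar>mu n t\<bar> \<le> (\<Sum>t\<in>T. \<bar>mu n t\<bar>)" by (rule member_le_sum) (use \<open>t \<in> T\<close> T in auto)
    then show "\<bar>mu n t\<bar> \<le> 1" using mu1[of n] by simp
  qed
  from finite_coord_subseq[OF T this] obtain r L where r: "strict_mono r"
    and L: "\<forall>t\<in>T. (\<lambda>n. mu (r n) t) \<longlonglongrightarrow> L t" by blast
  have "(\<lambda>n. dist (xs n) x0) \<longlonglongrightarrow> 0"
  proof (rule real_tendsto_sandwich[of "\<lambda>n. 0" _ _ "\<lambda>n. 1 / real (Suc n)"])
    show "\<forall>\<^sub>F n in sequentially. 0 \<le> dist (xs n) x0" by simp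
    show "\<forall>\<^sub>F n in sequentially. dist (xs n) x0 \<le> 1 / real (Suc n)"
      by (intro always_eventually allI less_imp_le[OF xs])
  qed (simp, rule inv_Suc_tendsto)
  then have "xs \<longlonglongrightarrow> x0" by (subst tendsto_dist_iff)
  then have xr: "(\<lambda>n. xs (r n)) \<longlonglongrightarrow> x0" using LIMSEQ_subseq_LIMSEQ[OF _ r] by (simp add: o_def)
  have "(\<lambda>n. \<Sum>t\<in>T. mu (r n) t *\<^sub>R v t (xs (r n))) \<longlonglongrightarrow> (\<Sum>t\<in>T. L t *\<^sub>R v t x0)"
  proof (intro tendsto_sum tendsto_scaleR)
    fix t assume t: "t \<in> T"
    show "(\<lambda>n. mu (r n) t) \<longlonglongrightarrow> L t" using L t by blast
    show "(\<lambda>n. v t (xs (r n))) \<longlonglongrightarrow> v t x0"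
      using isCont_tendsto_compose[OF _ xr, of "v t"] cont t by blast
  qed
  moreover have "(\<lambda>n. \<Sum>t\<in>T. mu (r n) t *\<^sub>R v t (xs (r n))) \<longlonglongrightarrow> 0"
  proof -
    have lim1: "(\<lambda>n. 1 / real (Suc (r n))) \<longlonglongrightarrow> 0"
      using LIMSEQ_subseq_LIMSEQ[OF inv_Suc_tendsto r] by (simp add: o_def)
    have ev1: "\<forall>\<^sub>F n in sequentially. norm (\<Sum>t\<in>T. mu (r n) t *\<^sub>R v t (xs (r n))) \<le> 1 / real (Suc (r n))"
      by (intro always_eventually allI less_imp_le[OF musmall])
    show ?thesis by (rule Lim_null_comparison[OF ev1 lim1])
  qed
  ultimately have sum0: "(\<Sum>t\<in>T. L t *\<^sub>R v t x0) = 0" using LIMSEQ_unique by blast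
  have "(\<lambda>n. \<Sum>t\<in>T. \<bar>mu (r n) t\<bar>) \<longlonglongrightarrow> (\<Sum>t\<in>T. \<bar>L t\<bar>)"
    by (intro tendsto_sum tendsto_rabs) (use L in blast)
  then have "(\<lambda>n. 1) \<longlonglongrightarrow> (\<Sum>t\<in>T. \<bar>L t\<bar>)" using mu1 by simp
  then have "(\<Sum>t\<in>T. \<bar>L t\<bar>) = 1" using LIMSEQ_unique[OF _ tendsto_const] by blast
  then have "\<exists>t\<in>T. L t \<noteq> 0"
  proof (rule contrapos_pp)
    assume "\<not> (\<exists>t\<in>T. L t \<noteq> 0)"
    then have "(\<Sum>t\<in>T. \<bar>L t\<bar>) = 0" by simp
    then show "(\<Sum>t\<in>T. \<bar>L t\<bar>) \<noteq> 1" by simp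
  qed
  then have "fam_lin_dep (\<lambda>t. v t x0) T" unfolding fam_lin_dep_def using sum0 by (intro exI[of _ L]) blast
  then show False using ind by simp
qed




lemma pos_lin_depI:
  assumes "\<forall>i\<in>K. \<alpha> i \<ge> 0" "(\<exists>i\<in>K. \<alpha> i \<noteq> 0) \<or> (\<exists>i\<in>T. \<beta> i \<noteq> 0)"
    "(\<Sum>i\<in>K. \<alpha> i *\<^sub>R a i) + (\<Sum>i\<in>T. \<beta> i *\<^sub>R b i) = 0"
  shows "pos_lin_dep a K b T"
  unfolding pos_lin_dep_def by (rule exI[where x=\<alpha>], rule exI[where x=\<beta>]) (use assms in blast)

lemma min_posdep:
  fixes v :: "nat \<Rightarrow> 'b::real_vector"
  assumes V: "finite V" and T: "finite T" and VT: "V \<inter> T = {}"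
    and indT: "\<not> fam_lin_dep v T" and pd: "pos_lin_dep v V v T"
  shows "\<exists>K \<alpha> \<beta>. K \<subseteq> V \<and> K \<noteq> {} \<and> (\<forall>i\<in>K. \<alpha> i > 0) \<and>
     (\<Sum>i\<in>K. \<alpha> i *\<^sub>R v i) + (\<Sum>i\<in>T. \<beta> i *\<^sub>R v i) = 0 \<and>
     (\<forall>k\<in>K. \<not> fam_lin_dep v ((K - {k}) \<union> T))"
proof -
  define P where "P K \<longleftrightarrow> K \<subseteq> V \<and> pos_lin_dep v K v T" for K
  have "P V" using pd unfolding P_def by simp
  then obtain K where PK: "P K" and minK: "\<And>K'. P K' \<Longrightarrow> card K \<le> card K'"
    using ex_has_least_nat[of P V card] by blast
  have KV: "K \<subseteq> V" using PK unfolding P_def by simp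
  have finK: "finite K" using KV V finite_subset by blast
  have KT: "K \<inter> T = {}" using KV VT by blast
  obtain \<alpha> \<beta> where a0: "\<forall>i\<in>K. \<alpha> i \<ge> 0" and nz: "(\<exists>i\<in>K. \<alpha> i \<noteq> 0) \<or> (\<exists>i\<in>T. \<beta> i \<noteq> 0)"
    and s0: "(\<Sum>i\<in>K. \<alpha> i *\<^sub>R v i) + (\<Sum>i\<in>T. \<beta> i *\<^sub>R v i) = 0"
    using PK unfolding P_def pos_lin_dep_def by blast
  have apos: "\<forall>i\<in>K. \<alpha> i > 0"
  proof (rule ccontr)
    assume "\<not> (\<forall>i\<in>K. \<alpha> i > 0)"
    then obtain i where i: "i \<in> K" "\<alpha> i = 0" using a0 by force
    have "P (K - {i})" unfolding P_def
    proof (intro conjI pos_lin_depI[of _ \<alpha> _ \<beta>])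
      show "K - {i} \<subseteq> V" using KV by blast
      show "\<forall>j\<in>K - {i}. 0 \<le> \<alpha> j" using a0 by blast
      show "(\<exists>j\<in>K - {i}. \<alpha> j \<noteq> 0) \<or> (\<exists>j\<in>T. \<beta> j \<noteq> 0)" using nz i by blast
      have "(\<Sum>j\<in>K. \<alpha> j *\<^sub>R v j) = \<alpha> i *\<^sub>R v i + (\<Sum>j\<in>K - {i}. \<alpha> j *\<^sub>R v j)"
        using sum.remove[OF finK i(1)] .
      then show "(\<Sum>j\<in>K - {i}. \<alpha> j *\<^sub>R v j) + (\<Sum>j\<in>T. \<beta> j *\<^sub>R v j) = 0" using s0 i by simp
    qed
    then have "card K \<le> card (K - {i})" by (rule minK)
    moreover have "card (K - {i}) < card K" by (rule card_Diff1_less[OF finK i(1)])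
    ultimately show False by simp
  qed
  have Kne: "K \<noteq> {}"
  proof
    assume "K = {}"
    then have "(\<Sum>i\<in>T. \<beta> i *\<^sub>R v i) = 0" "\<exists>i\<in>T. \<beta> i \<noteq> 0" using s0 nz by auto
    then have "fam_lin_dep v T" unfolding fam_lin_dep_def by (intro exI[of _ \<beta>]) blast
    then show False using indT by simp
  qed
  have indK: "\<forall>k\<in>K. \<not> fam_lin_dep v ((K - {k}) \<union> T)"
  proof (intro ballI notI)
    fix k assume k: "k \<in> K" and dep: "fam_lin_dep v ((K - {k}) \<union> T)"
    define K1 where "K1 = K - {k}"
    have finK1: "finite K1" using finK unfolding K1_def by simp
    have K1T: "K1 \<inter> T = {}" using KT unfolding K1_def by blast
    obtain c where cnz: "\<exists>i\<in>K1 \<union> T. c i \<noteq> 0" and cs: "(\<Sum>i\<in>K1 \<union> T. c i *\<^sub>R v i) = 0"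
      using dep unfolding fam_lin_dep_def K1_def by blast
    have cs2: "(\<Sum>i\<in>K1. c i *\<^sub>R v i) + (\<Sum>i\<in>T. c i *\<^sub>R v i) = 0"
      using cs sum.union_disjoint[OF finK1 T K1T, of "\<lambda>i. c i *\<^sub>R v i"] by simp
    have "\<exists>i\<in>K1. c i \<noteq> 0"
    proof (rule ccontr)
      assume "\<not> (\<exists>i\<in>K1. c i \<noteq> 0)"
      then have "(\<Sum>i\<in>T. c i *\<^sub>R v i) = 0" "\<exists>i\<in>T. c i \<noteq> 0" using cs2 cnz by auto
      then have "fam_lin_dep v T" unfolding fam_lin_dep_def by (intro exI[of _ c]) blast
      then show False using indT by simp
    qed
    then obtain c' where c'pos: "\<exists>i\<in>K1. c' i > 0"
      and cs3: "(\<Sum>i\<in>K1. c' i *\<^sub>R v i) + (\<Sum>i\<in>T. c' i *\<^sub>R v i) = 0"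
    proof (cases "\<exists>i\<in>K1. c i > 0")
      case True then show ?thesis using that[of c] cs2 by blast
    next
      case False
      from \<open>\<exists>i\<in>K1. c i \<noteq> 0\<close> obtain i where i: "i \<in> K1" "c i \<noteq> 0" by blast
      have "\<not> c i > 0" using False i(1) by blast
      then have "(- c) i > 0" using i(2) by simp
      then have "\<exists>i\<in>K1. (- c) i > 0" using i(1) by blast
      moreover have "(\<Sum>i\<in>K1. (- c) i *\<^sub>R v i) + (\<Sum>i\<in>T. (- c) i *\<^sub>R v i) = 0"
      proof -
        have e1: "(\<Sum>i\<in>K1. (- c) i *\<^sub>R v i) = - (\<Sum>i\<in>K1. c i *\<^sub>R v i)" by (simp add: sum_negf)
        have e2: "(\<Sum>i\<in>T. (- c) i *\<^sub>R v i) = - (\<Sum>i\<in>T. c i *\<^sub>R v i)" by (simp add: sum_negf)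
        have "- (\<Sum>i\<in>K1. c i *\<^sub>R v i) + - (\<Sum>i\<in>T. c i *\<^sub>R v i) = - ((\<Sum>i\<in>K1. c i *\<^sub>R v i) + (\<Sum>i\<in>T. c i *\<^sub>R v i))"
          by (rule minus_add_distrib[symmetric])
        then show ?thesis unfolding e1 e2 using cs2 by simp
      qed
      ultimately show ?thesis using that[of "- c"] by blast
    qed
    define Pos where "Pos = {i\<in>K1. c' i > 0}"
    have finPos: "finite Pos" using finK1 unfolding Pos_def by simp
    have Posne: "Pos \<noteq> {}" using c'pos unfolding Pos_def by blast
    define t where "t = Min ((\<lambda>i. \<alpha> i / c' i) ` Pos)"
    have "t \<in> (\<lambda>i. \<alpha> i / c' i) ` Pos" unfolding t_def by (rule Min_in) (use finPos Posne in auto)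
    then obtain i0 where i0: "i0 \<in> Pos" "t = \<alpha> i0 / c' i0" by blast
    have tle: "t \<le> \<alpha> i / c' i" if "i \<in> Pos" for i
      unfolding t_def using finPos that by (intro Min_le) auto
    have i0K1: "i0 \<in> K1" using i0 unfolding Pos_def by simp
    have i0K: "i0 \<in> K" "i0 \<noteq> k" using i0K1 unfolding K1_def by auto
    have tpos: "t \<ge> 0" using i0 apos i0K unfolding Pos_def by (simp add: less_imp_le)
    define \<alpha>' where "\<alpha>' i = (if i = k then \<alpha> k else \<alpha> i - t * c' i)" for i
    define \<beta>' where "\<beta>' i = \<beta> i - t * c' i" for i
    have a'nn: "\<alpha>' i \<ge> 0" if "i \<in> K" for i
    proof (cases "i = k")
      case True then show ?thesis using apos that unfolding \<alpha>'_def by (simp add: less_imp_le)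
    next
      case False
      then have iK1: "i \<in> K1" using that unfolding K1_def by simp
      show ?thesis
      proof (cases "c' i > 0")
        case True
        then have "i \<in> Pos" using iK1 unfolding Pos_def by simp
        then have "t \<le> \<alpha> i / c' i" by (rule tle)
        then have "t * c' i \<le> \<alpha> i" using True by (simp add: le_divide_eq)
        then show ?thesis using False unfolding \<alpha>'_def by simp
      next
        case False': False
        have "t * c' i \<le> 0" using tpos False' by (simp add: mult_nonneg_nonpos)
        moreover have "\<alpha> i > 0" using apos that by blast
        ultimately show ?thesis using False unfolding \<alpha>'_def by simp
      qed
    qed
    have a'i0: "\<alpha>' i0 = 0" using i0 i0K unfolding \<alpha>'_def Pos_def by simp
    have sumK: "(\<Sum>i\<in>K. \<alpha>' i *\<^sub>R v i) = (\<Sum>i\<in>K. \<alpha> i *\<^sub>R v i) - t *\<^sub>R (\<Sum>i\<in>K1. c' i *\<^sub>R v i)"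
    proof -
      have "(\<Sum>i\<in>K. \<alpha>' i *\<^sub>R v i) = \<alpha>' k *\<^sub>R v k + (\<Sum>i\<in>K1. \<alpha>' i *\<^sub>R v i)"
        unfolding K1_def using sum.remove[OF finK k] .
      also have "(\<Sum>i\<in>K1. \<alpha>' i *\<^sub>R v i) = (\<Sum>i\<in>K1. \<alpha> i *\<^sub>R v i - (t * c' i) *\<^sub>R v i)"
        by (rule sum.cong) (auto simp: \<alpha>'_def K1_def scaleR_diff_left)
      also have "\<dots> = (\<Sum>i\<in>K1. \<alpha> i *\<^sub>R v i) - t *\<^sub>R (\<Sum>i\<in>K1. c' i *\<^sub>R v i)"
        by (simp add: sum_subtractf scaleR_sum_right)
      also have "\<alpha>' k *\<^sub>R v k + ((\<Sum>i\<in>K1. \<alpha> i *\<^sub>R v i) - t *\<^sub>R (\<Sum>i\<in>K1. c' i *\<^sub>R v i))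
          = (\<alpha> k *\<^sub>R v k + (\<Sum>i\<in>K1. \<alpha> i *\<^sub>R v i)) - t *\<^sub>R (\<Sum>i\<in>K1. c' i *\<^sub>R v i)"
        unfolding \<alpha>'_def by simp
      also have "\<alpha> k *\<^sub>R v k + (\<Sum>i\<in>K1. \<alpha> i *\<^sub>R v i) = (\<Sum>i\<in>K. \<alpha> i *\<^sub>R v i)"
        unfolding K1_def using sum.remove[OF finK k, of "\<lambda>i. \<alpha> i *\<^sub>R v i"] by simp
      finally show ?thesis .
    qed
    have sumT: "(\<Sum>i\<in>T. \<beta>' i *\<^sub>R v i) = (\<Sum>i\<in>T. \<beta> i *\<^sub>R v i) - t *\<^sub>R (\<Sum>i\<in>T. c' i *\<^sub>R v i)"
      unfolding \<beta>'_def by (simp add: scaleR_diff_left sum_subtractf scaleR_sum_right)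
    have s': "(\<Sum>i\<in>K. \<alpha>' i *\<^sub>R v i) + (\<Sum>i\<in>T. \<beta>' i *\<^sub>R v i) = 0"
    proof -
      have "(\<Sum>i\<in>K. \<alpha>' i *\<^sub>R v i) + (\<Sum>i\<in>T. \<beta>' i *\<^sub>R v i)
          = ((\<Sum>i\<in>K. \<alpha> i *\<^sub>R v i) + (\<Sum>i\<in>T. \<beta> i *\<^sub>R v i)) - t *\<^sub>R ((\<Sum>i\<in>K1. c' i *\<^sub>R v i) + (\<Sum>i\<in>T. c' i *\<^sub>R v i))"
        unfolding sumK sumT by (simp add: algebra_simps)
      also have "\<dots> = 0" using s0 cs3 by simp
      finally show ?thesis .
    qed
    have "P (K - {i0})" unfolding P_def
    proof (intro conjI pos_lin_depI[of _ \<alpha>' _ \<beta>'])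
      show "K - {i0} \<subseteq> V" using KV by blast
      show "\<forall>j\<in>K - {i0}. 0 \<le> \<alpha>' j" using a'nn by blast
      have "\<alpha>' k \<noteq> 0" using apos k unfolding \<alpha>'_def by force
      then show "(\<exists>j\<in>K - {i0}. \<alpha>' j \<noteq> 0) \<or> (\<exists>j\<in>T. \<beta>' j \<noteq> 0)" using k i0K by blast
      have "(\<Sum>j\<in>K. \<alpha>' j *\<^sub>R v j) = \<alpha>' i0 *\<^sub>R v i0 + (\<Sum>j\<in>K - {i0}. \<alpha>' j *\<^sub>R v j)"
        using sum.remove[OF finK i0K(1)] .
      then show "(\<Sum>j\<in>K - {i0}. \<alpha>' j *\<^sub>R v j) + (\<Sum>j\<in>T. \<beta>' j *\<^sub>R v j) = 0" using s' a'i0 by simp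
    qed
    then have "card K \<le> card (K - {i0})" by (rule minK)
    moreover have "card (K - {i0}) < card K" by (rule card_Diff1_less[OF finK i0K(1)])
    ultimately show False by simp
  qed
  show ?thesis
    by (intro exI[of _ K] exI[of _ \<alpha>] exI[of _ \<beta>]) (use KV Kne apos s0 indK in blast)
qed




lemma sign_lemma:
  fixes w :: "nat \<Rightarrow> nat \<Rightarrow> 'b::real_normed_vector" and wb :: "nat \<Rightarrow> 'b"
  assumes K: "finite K" and T: "finite T" and KT: "K \<inter> T = {}" and k0: "k0 \<in> K"
    and apos: "\<forall>i\<in>K. \<alpha> i > 0"
    and sum0: "(\<Sum>i\<in>K. \<alpha> i *\<^sub>R wb i) + (\<Sum>i\<in>T. \<beta> i *\<^sub>R wb i) = 0"
    and ind: "\<forall>k\<in>K. \<not> fam_lin_dep wb ((K - {k}) \<union> T)"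
    and conv: "\<forall>i\<in>K \<union> T. (\<lambda>n. w n i) \<longlonglongrightarrow> wb i"
    and dep: "eventually (\<lambda>n. fam_lin_dep (w n) (K \<union> T)) sequentially"
    and P: "eventually P sequentially"
  shows "\<exists>n. P n \<and> (\<exists>c. (\<forall>i\<in>K. c i > 0) \<and> (\<Sum>i\<in>K \<union> T. c i *\<^sub>R w n i) = 0)"
proof (rule ccontr)
  assume H: "\<not> ?thesis"
  define KT' where "KT' = K \<union> T"
  have finKT: "finite KT'" using K T unfolding KT'_def by simp
  obtain N where N: "\<And>n. n \<ge> N \<Longrightarrow> P n \<and> fam_lin_dep (w n) KT'"
    using eventually_conj[OF P dep] unfolding eventually_sequentially KT'_def by blast
  have ex: "\<forall>n. \<exists>c. n \<ge> N \<longrightarrow> (\<exists>i\<in>KT'. c i \<noteq> 0) \<and> (\<Sum>i\<in>KT'. c i *\<^sub>R w n i) = 0"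
    using N unfolding fam_lin_dep_def by blast
  obtain c where c: "\<And>n. n \<ge> N \<Longrightarrow> (\<exists>i\<in>KT'. c n i \<noteq> 0) \<and> (\<Sum>i\<in>KT'. c n i *\<^sub>R w n i) = 0"
    using choice[OF ex] by blast
  define sn where "sn n = (\<Sum>i\<in>KT'. \<bar>c n i\<bar>)" for n
  have snpos: "sn n > 0" if nN: "n \<ge> N" for n
  proof -
    obtain i where i: "i \<in> KT'" "c n i \<noteq> 0" using c[OF nN] by blast
    have "\<bar>c n i\<bar> \<le> sn n" unfolding sn_def by (rule member_le_sum) (use i finKT in auto)
    then show ?thesis using i(2) by simp
  qed
  define sg where "sg n = (if c n k0 < 0 then -1 else (1::real))" for n
  define d where "d n i = sg n * c n i / sn n" for n i
  have sgabs: "\<bar>sg n\<bar> = 1" for n unfolding sg_def by simp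
  have d1: "(\<Sum>i\<in>KT'. \<bar>d n i\<bar>) = 1" if "n \<ge> N" for n
  proof -
    have "(\<Sum>i\<in>KT'. \<bar>d n i\<bar>) = (\<Sum>i\<in>KT'. \<bar>c n i\<bar> / sn n)"
      unfolding d_def using snpos[OF that] sgabs[of n] by (intro sum.cong) (auto simp: abs_mult)
    also have "\<dots> = 1" using snpos[OF that] unfolding sn_def by (simp add: sum_divide_distrib[symmetric])
    finally show ?thesis .
  qed
  have dk0: "d n k0 \<ge> 0" if "n \<ge> N" for n
    unfolding d_def sg_def using snpos[OF that] by (auto simp: divide_nonneg_pos mult_nonpos_nonpos)
  have ds: "(\<Sum>i\<in>KT'. d n i *\<^sub>R w n i) = 0" if "n \<ge> N" for n
  proof -
    have "(\<Sum>i\<in>KT'. d n i *\<^sub>R w n i) = (sg n / sn n) *\<^sub>R (\<Sum>i\<in>KT'. c n i *\<^sub>R w n i)"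
      unfolding d_def scaleR_sum_right by (intro sum.cong) auto
    then show ?thesis using c[OF that] by simp
  qed
  have bnd: "\<forall>m. \<forall>i\<in>KT'. \<bar>d (m + N) i\<bar> \<le> 1"
  proof (intro allI ballI)
    fix m i assume i: "i \<in> KT'"
    have "\<bar>d (m + N) i\<bar> \<le> (\<Sum>i\<in>KT'. \<bar>d (m + N) i\<bar>)" by (rule member_le_sum) (use i finKT in auto)
    then show "\<bar>d (m + N) i\<bar> \<le> 1" using d1[of "m + N"] by simp
  qed
  obtain r D where r: "strict_mono r" and D: "\<forall>i\<in>KT'. (\<lambda>m. d (r m + N) i) \<longlonglongrightarrow> D i"
    using finite_coord_subseq[OF finKT bnd] by auto
  have D1: "(\<Sum>i\<in>KT'. \<bar>D i\<bar>) = 1"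
  proof -
    have "(\<lambda>m. \<Sum>i\<in>KT'. \<bar>d (r m + N) i\<bar>) \<longlonglongrightarrow> (\<Sum>i\<in>KT'. \<bar>D i\<bar>)"
      by (intro tendsto_sum tendsto_rabs) (use D in blast)
    moreover have "(\<lambda>m. \<Sum>i\<in>KT'. \<bar>d (r m + N) i\<bar>) = (\<lambda>m. 1)" using d1 by simp
    ultimately have "(\<lambda>m. 1) \<longlonglongrightarrow> (\<Sum>i\<in>KT'. \<bar>D i\<bar>)" by simp
    then show ?thesis using LIMSEQ_unique[OF _ tendsto_const] by blast
  qed
  have k0KT: "k0 \<in> KT'" using k0 unfolding KT'_def by simp
  have Dk0: "D k0 \<ge> 0"
  proof -
    have "(\<lambda>m. d (r m + N) k0) \<longlonglongrightarrow> D k0" using D k0KT by blast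
    moreover have "\<forall>\<^sub>F m in sequentially. 0 \<le> d (r m + N) k0" using dk0 by simp
    ultimately show ?thesis by (rule tendsto_lowerbound) simp
  qed
  have Dsum: "(\<Sum>i\<in>KT'. D i *\<^sub>R wb i) = 0"
  proof -
    have wr: "(\<lambda>m. w (r m + N) i) \<longlonglongrightarrow> wb i" if "i \<in> KT'" for i
    proof -
      have "strict_mono (\<lambda>m. r m + N)" using r by (simp add: strict_mono_def)
      then show ?thesis using LIMSEQ_subseq_LIMSEQ[of "\<lambda>n. w n i" "wb i" "\<lambda>m. r m + N"] conv that
        unfolding KT'_def by (simp add: o_def)
    qed
    have "(\<lambda>m. \<Sum>i\<in>KT'. d (r m + N) i *\<^sub>R w (r m + N) i) \<longlonglongrightarrow> (\<Sum>i\<in>KT'. D i *\<^sub>R wb i)"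
    proof (intro tendsto_sum tendsto_scaleR)
      fix i assume "i \<in> KT'"
      then show "(\<lambda>m. d (r m + N) i) \<longlonglongrightarrow> D i" "(\<lambda>m. w (r m + N) i) \<longlonglongrightarrow> wb i"
        using D wr by blast+
    qed
    moreover have "(\<lambda>m. \<Sum>i\<in>KT'. d (r m + N) i *\<^sub>R w (r m + N) i) = (\<lambda>m. 0)" using ds by simp
    ultimately have "(\<lambda>m. 0) \<longlonglongrightarrow> (\<Sum>i\<in>KT'. D i *\<^sub>R wb i)" by simp
    then show ?thesis using LIMSEQ_unique[OF _ tendsto_const] by metis
  qed
  define ab where "ab i = (if i \<in> K then \<alpha> i else \<beta> i)" for i
  define \<theta> where "\<theta> = D k0 / \<alpha> k0"
  define E where "E i = D i - \<theta> * ab i" for i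
  have ak0: "\<alpha> k0 > 0" using apos k0 by blast
  have abs0: "(\<Sum>i\<in>KT'. ab i *\<^sub>R wb i) = 0"
  proof -
    have "(\<Sum>i\<in>KT'. ab i *\<^sub>R wb i) = (\<Sum>i\<in>K. ab i *\<^sub>R wb i) + (\<Sum>i\<in>T. ab i *\<^sub>R wb i)"
      unfolding KT'_def by (rule sum.union_disjoint[OF K T KT])
    also have "(\<Sum>i\<in>K. ab i *\<^sub>R wb i) = (\<Sum>i\<in>K. \<alpha> i *\<^sub>R wb i)"
      unfolding ab_def by (intro sum.cong) auto
    also have "(\<Sum>i\<in>T. ab i *\<^sub>R wb i) = (\<Sum>i\<in>T. \<beta> i *\<^sub>R wb i)"
      unfolding ab_def using KT by (intro sum.cong) auto
    finally show ?thesis using sum0 by simp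
  qed
  have Es: "(\<Sum>i\<in>KT'. E i *\<^sub>R wb i) = 0"
  proof -
    have "(\<Sum>i\<in>KT'. E i *\<^sub>R wb i) = (\<Sum>i\<in>KT'. D i *\<^sub>R wb i) - \<theta> *\<^sub>R (\<Sum>i\<in>KT'. ab i *\<^sub>R wb i)"
      unfolding E_def by (simp add: scaleR_diff_left sum_subtractf scaleR_sum_right)
    then show ?thesis using Dsum abs0 by simp
  qed
  have Ek0: "E k0 = 0" unfolding E_def \<theta>_def ab_def using k0 ak0 by simp
  have KTeq: "KT' = insert k0 ((K - {k0}) \<union> T)" unfolding KT'_def using k0 by blast
  have Es': "(\<Sum>i\<in>(K - {k0}) \<union> T. E i *\<^sub>R wb i) = 0"
  proof -
    have "k0 \<notin> (K - {k0}) \<union> T" using k0 KT by blast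
    moreover have "finite ((K - {k0}) \<union> T)" using K T by simp
    ultimately have "(\<Sum>i\<in>KT'. E i *\<^sub>R wb i) = E k0 *\<^sub>R wb k0 + (\<Sum>i\<in>(K - {k0}) \<union> T. E i *\<^sub>R wb i)"
      unfolding KTeq by simp
    then show ?thesis using Es Ek0 by simp
  qed
  have E0: "\<forall>i\<in>(K - {k0}) \<union> T. E i = 0"
  proof (rule ccontr)
    assume "\<not> (\<forall>i\<in>(K - {k0}) \<union> T. E i = 0)"
    then have "\<exists>i\<in>(K - {k0}) \<union> T. E i \<noteq> 0" by blast
    then have "fam_lin_dep wb ((K - {k0}) \<union> T)" unfolding fam_lin_dep_def using Es'
      by (intro exI[of _ E]) blast
    then show False using ind k0 by blast
  qed
  have DE: "D i = \<theta> * ab i" if "i \<in> KT'" for i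
  proof (cases "i = k0")
    case True then show ?thesis using Ek0 unfolding E_def by simp
  next
    case False
    then have "i \<in> (K - {k0}) \<union> T" using that unfolding KT'_def by blast
    then show ?thesis using E0 unfolding E_def by simp
  qed
  have thpos: "\<theta> > 0"
  proof -
    have "\<theta> \<ge> 0" unfolding \<theta>_def using Dk0 ak0 by simp
    moreover have "\<theta> \<noteq> 0"
    proof
      assume "\<theta> = 0"
      then have "(\<Sum>i\<in>KT'. \<bar>D i\<bar>) = 0" using DE by simp
      then show False using D1 by simp
    qed
    ultimately show ?thesis by simp
  qed
  have DK: "\<forall>i\<in>K. D i > 0"
  proof
    fix i assume i: "i \<in> K"
    then have "D i = \<theta> * \<alpha> i" using DE[of i] unfolding KT'_def ab_def by simp
    then show "D i > 0" using thpos apos i by simp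
  qed
  have "\<forall>\<^sub>F m in sequentially. \<forall>i\<in>K. d (r m + N) i > 0"
  proof (rule eventually_ball_finite[OF K], rule ballI)
    fix i assume i: "i \<in> K"
    then have "(\<lambda>m. d (r m + N) i) \<longlonglongrightarrow> D i" using D unfolding KT'_def by blast
    then show "\<forall>\<^sub>F m in sequentially. d (r m + N) i > 0" using DK i order_tendstoD(1) by blast
  qed
  then obtain M where "\<forall>m\<ge>M. \<forall>i\<in>K. d (r m + N) i > 0" unfolding eventually_sequentially by blast
  then have m: "\<forall>i\<in>K. d (r M + N) i > 0" by blast
  define m where "m = M"
  note m = m[folded m_def]
  have "P (r m + N)" using N[of "r m + N"] by simp
  moreover have "(\<Sum>i\<in>K \<union> T. d (r m + N) i *\<^sub>R w (r m + N) i) = 0" using ds[of "r m + N"] unfolding KT'_def by simp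
  ultimately have "\<exists>n. P n \<and> (\<exists>c. (\<forall>i\<in>K. c i > 0) \<and> (\<Sum>i\<in>K \<union> T. c i *\<^sub>R w n i) = 0)"
    using m by (intro exI[of _ "r m + N"] conjI exI[of _ "d (r m + N)"])
  then show False using H by blast
qed




lemma ev_at_to_right: "eventually P (at (0::real)) \<Longrightarrow> eventually P (at_right 0)"
  using filter_leD[OF at_le[of "{0<..}" UNIV]] by simp

lemma line_deriv:
  fixes g :: "'b::real_normed_vector \<Rightarrow> real"
  assumes "(g has_derivative (\<lambda>w. g' w)) (at z)"
  shows "((\<lambda>t. g (z + t *\<^sub>R d)) has_real_derivative g' d) (at 0)"
proof -
  have lin: "linear g'" using assms has_derivative_linear by blast
  have "((\<lambda>t. z + t *\<^sub>R d) has_derivative (\<lambda>t. t *\<^sub>R d)) (at 0)"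
    by (auto intro!: derivative_eq_intros)
  then have "((\<lambda>t. g (z + t *\<^sub>R d)) has_derivative (\<lambda>t. g' (t *\<^sub>R d))) (at 0)"
    using has_derivative_compose[of "\<lambda>t. z + t *\<^sub>R d" _ 0 UNIV g g'] assms by simp
  then have "((\<lambda>t. g (z + t *\<^sub>R d)) has_derivative (\<lambda>t. g' d * t)) (at 0)"
    using linear_scale[OF lin] by (simp add: linear_cmul[OF lin] mult.commute)
  then show ?thesis by (simp add: has_field_derivative_def)
qed

lemma stationarity:
  fixes g :: "nat \<Rightarrow> 'b::euclidean_space \<Rightarrow> real" and Gr :: "nat \<Rightarrow> 'b"
  assumes I: "finite I"
    and der: "\<forall>i\<in>I. (g i has_derivative (\<lambda>w. Gr i \<bullet> w)) (at z)"
    and Rdef: "\<forall>y. R y = sqrt (\<Sum>i\<in>I. (max (g i y) 0)\<^sup>2)"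
    and eps: "eps \<ge> 0" and t0: "t0 > 0"
    and minim: "\<forall>t. 0 < t \<and> t < t0 \<longrightarrow> R z + eps * norm (z - q) \<le> R (z + t *\<^sub>R d) + eps * norm (z + t *\<^sub>R d - q)"
  shows "- (eps * R z * norm d) \<le> (\<Sum>i\<in>I. max (g i z) 0 * (Gr i \<bullet> d))"
proof (cases "R z = 0")
  case True
  then have "(\<Sum>i\<in>I. (max (g i z) 0)\<^sup>2) = 0" using Rdef by simp
  then have "\<forall>i\<in>I. (max (g i z) 0)\<^sup>2 = 0" using sum_nonneg_eq_0_iff[OF I, of "\<lambda>i. (max (g i z) 0)\<^sup>2"] by simp
  then have "\<forall>i\<in>I. max (g i z) 0 = 0" by simp
  then show ?thesis using True by simp
next
  case False
  have Rnn: "R y \<ge> 0" for y using Rdef by (simp add: sum_nonneg)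
  have Rz: "R z > 0" using False Rnn[of z] by simp
  define I0 where "I0 = {i\<in>I. g i z \<ge> 0}"
  have finI0: "finite I0" using I unfolding I0_def by simp
  define Q where "Q t = (\<Sum>i\<in>I0. (g i (z + t *\<^sub>R d))\<^sup>2)" for t
  define P where "P t = (\<Sum>i\<in>I. (max (g i (z + t *\<^sub>R d)) 0)\<^sup>2)" for t
  have PR: "P t = (R (z + t *\<^sub>R d))\<^sup>2" for t
    unfolding P_def using Rdef by (simp add: sum_nonneg)
  have Q0: "Q 0 = (R z)\<^sup>2"
  proof -
    have "Q 0 = (\<Sum>i\<in>I0. (max (g i z) 0)\<^sup>2)" unfolding Q_def I0_def by (intro sum.cong) auto
    also have "\<dots> = (\<Sum>i\<in>I. (max (g i z) 0)\<^sup>2)"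
      unfolding I0_def by (intro sum.mono_neutral_left I) auto
    finally show ?thesis using Rdef by (simp add: sum_nonneg)
  qed
  have ld: "((\<lambda>t. g i (z + t *\<^sub>R d)) has_real_derivative (Gr i \<bullet> d)) (at 0)" if "i \<in> I" for i
    using line_deriv[of "g i" "\<lambda>w. Gr i \<bullet> w" z d] der that by simp
  have QD: "(Q has_real_derivative (\<Sum>i\<in>I0. 2 * ((Gr i \<bullet> d) * g i z))) (at 0)"
    unfolding Q_def
  proof (rule DERIV_sum)
    fix i assume "i \<in> I0"
    then have "i \<in> I" unfolding I0_def by simp
    from DERIV_power[OF ld[OF this], of 2]
    show "((\<lambda>t. (g i (z + t *\<^sub>R d))\<^sup>2) has_real_derivative 2 * ((Gr i \<bullet> d) * g i z)) (at 0)"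
      by simp
  qed
  have Dsum: "(\<Sum>i\<in>I0. 2 * ((Gr i \<bullet> d) * g i z)) = 2 * (\<Sum>i\<in>I. max (g i z) 0 * (Gr i \<bullet> d))"
  proof -
    have "(\<Sum>i\<in>I0. 2 * ((Gr i \<bullet> d) * g i z)) = (\<Sum>i\<in>I0. 2 * (max (g i z) 0 * (Gr i \<bullet> d)))"
      unfolding I0_def by (intro sum.cong) auto
    also have "\<dots> = (\<Sum>i\<in>I. 2 * (max (g i z) 0 * (Gr i \<bullet> d)))"
      unfolding I0_def by (intro sum.mono_neutral_left I) auto
    finally show ?thesis by (simp add: sum_distrib_left)
  qed
  have evneg: "eventually (\<lambda>t. \<forall>i\<in>I - I0. g i (z + t *\<^sub>R d) < 0) (at_right 0)"
  proof (rule eventually_ball_finite, use I in simp, rule ballI)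
    fix i assume i: "i \<in> I - I0"
    then have gi: "g i z < 0" unfolding I0_def by auto
    have "isCont (\<lambda>t. g i (z + t *\<^sub>R d)) 0"
      using ld[of i] i DERIV_isCont by blast
    then have "((\<lambda>t. g i (z + t *\<^sub>R d)) \<longlongrightarrow> g i z) (at 0)"
      unfolding isCont_def by simp
    then have "eventually (\<lambda>t. g i (z + t *\<^sub>R d) < 0) (at 0)"
      using gi order_tendstoD(2) by blast
    then show "eventually (\<lambda>t. g i (z + t *\<^sub>R d) < 0) (at_right 0)" by (rule ev_at_to_right)
  qed
  define tb where "tb = min t0 (R z / (eps * norm d + 1))"
  have tbpos: "tb > 0" unfolding tb_def using t0 Rz eps by (simp add: add_nonneg_pos)
  have evsmall: "eventually (\<lambda>t. 0 < t \<and> t < tb) (at_right 0)"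
    by (rule eventually_at_rightI[of 0 tb]) (use tbpos in auto)
  have "eventually (\<lambda>t. (- 2 * eps * R z * norm d) * t \<le> Q t - Q 0) (at_right 0)"
    using evneg evsmall
  proof eventually_elim
    case (elim t)
    then have t: "0 < t" "t < t0" "t < R z / (eps * norm d + 1)" unfolding tb_def by auto
    have "norm (z + t *\<^sub>R d - q) \<le> norm (z - q) + t * norm d"
      using norm_triangle_ineq[of "z - q" "t *\<^sub>R d"] t(1) by (simp add: algebra_simps)
    then have "eps * norm (z + t *\<^sub>R d - q) \<le> eps * norm (z - q) + eps * t * norm d"
      using eps by (metis distrib_left mult.assoc mult_left_mono)
    then have Rlow: "R z - eps * t * norm d \<le> R (z + t *\<^sub>R d)"
      using minim t by force
    have "eps * t * norm d \<le> t * (eps * norm d + 1)" using t(1) by (simp add: algebra_simps)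
    also have "\<dots> < R z" using t(1,3) by (simp add: pos_less_divide_eq mult.commute add_nonneg_pos eps)
    finally have nn: "0 \<le> R z - eps * t * norm d" by simp
    have "(R z - eps * t * norm d)\<^sup>2 \<le> (R (z + t *\<^sub>R d))\<^sup>2"
      using Rlow nn by (simp add: power_mono)
    then have "(R z)\<^sup>2 - 2 * eps * R z * norm d * t \<le> P t"
      unfolding PR by (simp add: power2_eq_square algebra_simps)
         (smt (verit) mult_nonneg_nonneg eps norm_ge_zero t(1) zero_le_mult_iff zero_le_square)
    moreover have "P t \<le> Q t"
    proof -
      have "P t = (\<Sum>i\<in>I0. (max (g i (z + t *\<^sub>R d)) 0)\<^sup>2) + (\<Sum>i\<in>I - I0. (max (g i (z + t *\<^sub>R d)) 0)\<^sup>2)"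
        unfolding P_def using I by (subst sum.subset_diff[of I0 I]) (auto simp: I0_def)
      also have "(\<Sum>i\<in>I - I0. (max (g i (z + t *\<^sub>R d)) 0)\<^sup>2) = 0"
        using elim(1) by (intro sum.neutral) auto
      also have "(\<Sum>i\<in>I0. (max (g i (z + t *\<^sub>R d)) 0)\<^sup>2) \<le> Q t"
        unfolding Q_def
      proof (rule sum_mono)
        fix i show "(max (g i (z + t *\<^sub>R d)) 0)\<^sup>2 \<le> (g i (z + t *\<^sub>R d))\<^sup>2"
          by (cases "g i (z + t *\<^sub>R d) \<ge> 0") (auto simp: max_def)
      qed
      finally show ?thesis by simp
    qed
    ultimately show ?case using Q0 by (simp add: algebra_simps)
  qed
  from deriv_lb[OF QD this] have "- 2 * eps * R z * norm d \<le> 2 * (\<Sum>i\<in>I. max (g i z) 0 * (Gr i \<bullet> d))"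
    using Dsum by simp
  then show ?thesis by simp
qed




lemma cont2_tendsto:
  fixes F :: "'a::topological_space \<Rightarrow> 'b::topological_space \<Rightarrow> 'c::topological_space"
  assumes "continuous_on UNIV (\<lambda>z. F (fst z) (snd z))" "xs \<longlonglongrightarrow> x" "ys \<longlonglongrightarrow> y"
  shows "(\<lambda>n. F (xs n) (ys n)) \<longlonglongrightarrow> F x y"
proof -
  have "(\<lambda>n. (xs n, ys n)) \<longlonglongrightarrow> (x, y)" using assms(2,3) by (rule tendsto_Pair)
  from continuous_on_tendsto_compose[OF assms(1) this] show ?thesis by simp
qed

lemma Sol_min:
  assumes "w \<in> Sol f h l p x" "y \<in> Gamma h l p x"
  shows "f x w \<le> f x y"
proof -
  have "phi f h l p x \<le> ereal (f x y)" unfolding phi_def using assms(2) by (rule INF_lower)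
  moreover have "ereal (f x w) = phi f h l p x" using assms(1) unfolding Sol_def by simp
  ultimately have "ereal (f x w) \<le> ereal (f x y)" by simp
  then show ?thesis by simp
qed

lemma Sol_char:
  assumes "y \<in> Gamma h l p x" "w \<in> Sol f h l p x" "f x y \<le> f x w"
  shows "y \<in> Sol f h l p x"
proof -
  have "phi f h l p x \<le> ereal (f x y)" unfolding phi_def using assms(1) by (rule INF_lower)
  moreover have "ereal (f x w) = phi f h l p x" using assms(2) unfolding Sol_def by simp
  ultimately have "ereal (f x y) = phi f h l p x" using assms(3) by (metis antisym ereal_less_eq(3))
  then show ?thesis unfolding Sol_def using assms(1) by simp
qed

lemma quad_zero:
  fixes a b :: real
  assumes "\<forall>s. 2 * s * a \<le> s\<^sup>2 * b" "b \<ge> 0"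
  shows "a = 0"
proof -
  define s where "s = a / (b + 1)"
  have as: "a = s * (b + 1)" unfolding s_def using assms(2) by simp
  have "2 * s * a \<le> s\<^sup>2 * b" using assms(1) by blast
  then have "2 * s * (s * (b + 1)) \<le> s\<^sup>2 * b" using as by simp
  then have "s\<^sup>2 * (b + 2) \<le> 0" by (simp add: power2_eq_square algebra_simps)
  moreover have "s\<^sup>2 * (b + 2) \<ge> 0" using assms(2) by simp
  ultimately have "s\<^sup>2 * (b + 2) = 0" by simp
  then have "s = 0" using assms(2) by simp
  then show ?thesis using as by simp
qed

locale setting =
  fixes f :: "'a::euclidean_space \<Rightarrow> 'b::euclidean_space \<Rightarrow> real"
    and h :: "nat \<Rightarrow> 'a \<Rightarrow> 'b \<Rightarrow> real"
    and l p :: nat and xb :: 'a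
  assumes lp: "l \<le> p"
    and C1f: "C1_fun (\<lambda>z. f (fst z) (snd z))"
    and C1h: "\<forall>i\<in>{1..p}. C1_fun (\<lambda>z. h i (fst z) (snd z))"
    and xb_dom: "xb \<in> dom_map (Gamma h l p)"
    and A1f: "\<forall>x. convex_on UNIV (f x)"
    and A1I: "\<forall>x. \<forall>i\<in>{1..l}. convex_on UNIV (h i x)"
    and A1J: "\<forall>x. \<forall>i\<in>{l+1..p}. \<exists>a b. \<forall>y. h i x y = a \<bullet> y + b"
    and A2: "locally_bounded_at (Gamma h l p) xb"
    and RC: "\<forall>yb\<in>Sol f h l p xb. RCPLD_S f h l p (dom_map (Gamma h l p)) xb yb"
begin

lemma fder: "(f x has_derivative (\<lambda>w. G_y f h 0 x y \<bullet> w)) (at y)"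
  using C1_partial_deriv[OF C1f] by (simp add: G_y_def)

lemma hder: "i \<in> {1..p} \<Longrightarrow> (h i x has_derivative (\<lambda>w. G_y f h i x y \<bullet> w)) (at y)"
  using C1_partial_deriv[of "h i"] C1h by (simp add: G_y_def)

lemma Gcont: "i \<in> {0..p} \<Longrightarrow> continuous_on UNIV (\<lambda>z. G_y f h i (fst z) (snd z))"
  using C1_partial_cont[OF C1f] C1_partial_cont[of "h i"] C1h
  by (cases "i = 0") (auto simp: G_y_def)

lemma Gtend: "i \<in> {0..p} \<Longrightarrow> xs \<longlonglongrightarrow> x \<Longrightarrow> ys \<longlonglongrightarrow> y \<Longrightarrow>
    (\<lambda>n. G_y f h i (xs n) (ys n)) \<longlonglongrightarrow> G_y f h i x y"
  by (rule cont2_tendsto[OF Gcont])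

lemma ftend: "xs \<longlonglongrightarrow> x \<Longrightarrow> ys \<longlonglongrightarrow> y \<Longrightarrow> (\<lambda>n. f (xs n) (ys n)) \<longlonglongrightarrow> f x y"
  by (rule cont2_tendsto[OF C1_partial_fcont[OF C1f]])

lemma htend: "i \<in> {1..p} \<Longrightarrow> xs \<longlonglongrightarrow> x \<Longrightarrow> ys \<longlonglongrightarrow> y \<Longrightarrow> (\<lambda>n. h i (xs n) (ys n)) \<longlonglongrightarrow> h i x y"
  by (rule cont2_tendsto[OF C1_partial_fcont]) (use C1h in auto)

lemma hcont_y: "i \<in> {1..p} \<Longrightarrow> continuous_on UNIV (h i x)"
  by (intro continuous_at_imp_continuous_on ballI has_derivative_continuous[OF hder])

lemma fcont_y: "continuous_on UNIV (f x)"
  by (intro continuous_at_imp_continuous_on ballI has_derivative_continuous[OF fder])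

lemma aff_G0: "j \<in> {l+1..p} \<Longrightarrow> \<exists>a. \<forall>y. G_y f h j x y = a \<and> (\<forall>y'. h j x y' = h j x y + a \<bullet> (y' - y))"
proof -
  assume j: "j \<in> {l+1..p}"
  then obtain a b where ab: "\<forall>y. h j x y = a \<bullet> y + b" using A1J by blast
  have j1: "j \<in> {1..p}" "j \<noteq> 0" using j by auto
  have "G_y f h j x y = a" for y
  proof -
    have "grad_y (h j) x y = a"
    proof (rule affine_grad[of "h j" x a b y])
      show "\<forall>y. h j x y = a \<bullet> y + b" using ab by simp
      show "(h j x has_derivative (\<lambda>w. grad_y (h j) x y \<bullet> w)) (at y)"
        using hder[OF j1(1), of x y] j1(2) by (simp add: G_y_def)
    qed
    then show ?thesis using j1(2) by (simp add: G_y_def)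
  qed
  moreover have "h j x y' = h j x y + a \<bullet> (y' - y)" for y y' using ab by (simp add: inner_diff_right)
  ultimately show ?thesis by blast
qed

lemma aff_G: "j \<in> {l+1..p} \<Longrightarrow> G_y f h j x y = G_y f h j x y'"
  using aff_G0 by metis

lemma aff_h: "j \<in> {l+1..p} \<Longrightarrow> h j x y' = h j x y + G_y f h j x y \<bullet> (y' - y)"
  using aff_G0 by metis

end



context setting begin

lemma UI_not_fld:
  assumes "c0 > 0" "\<forall>lam. c0 * (\<Sum>t\<in>T. \<bar>lam t\<bar>) \<le> norm (\<Sum>t\<in>T. lam t *\<^sub>R v t)" "finite T"
  shows "\<not> fam_lin_dep v T"
proof
  assume "fam_lin_dep v T"
  then obtain c where c: "\<exists>i\<in>T. c i \<noteq> 0" "(\<Sum>i\<in>T. c i *\<^sub>R v i) = 0" unfolding fam_lin_dep_def by blast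
  then obtain i where i: "i \<in> T" "c i \<noteq> 0" by blast
  have "\<bar>c i\<bar> \<le> (\<Sum>t\<in>T. \<bar>c t\<bar>)" by (rule member_le_sum) (use i assms(3) in auto)
  then have "0 < c0 * (\<Sum>t\<in>T. \<bar>c t\<bar>)" using i(2) assms(1) by simp
  moreover have "c0 * (\<Sum>t\<in>T. \<bar>c t\<bar>) \<le> 0" using assms(2) c(2) by (metis norm_zero)
  ultimately show False by simp
qed

lemma q_lemma:
  fixes xs :: "nat \<Rightarrow> 'a" and T :: "nat set" and yb :: 'b
  assumes xs: "xs \<longlonglongrightarrow> xb" and ybG: "yb \<in> Gamma h l p xb"
    and TJ: "T \<subseteq> {l+1..p}"
    and c0: "c0 > 0"
    and UI: "\<forall>\<^sub>F n in sequentially. \<forall>lam. c0 * (\<Sum>t\<in>T. \<bar>lam t\<bar>) \<le> norm (\<Sum>t\<in>T. lam t *\<^sub>R G_y f h t (xs n) yb)"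
    and spanJT: "\<forall>\<^sub>F n in sequentially. span ((\<lambda>t. G_y f h t (xs n) yb) ` T) = span ((\<lambda>t. G_y f h t (xs n) yb) ` {l+1..p})"
    and ne: "\<forall>n. Gamma h l p (xs n) \<noteq> {}"
  shows "(\<lambda>n. closest_point {y. \<forall>j\<in>{l+1..p}. h j (xs n) y = 0} yb) \<longlonglongrightarrow> yb"
proof -
  define J where "J = {l+1..p}"
  define L where "L n = {y. \<forall>j\<in>J. h j (xs n) y = 0}" for n
  define q where "q n = closest_point (L n) yb" for n
  have finT: "finite T" using TJ finite_subset by blast
  have J1: "j \<in> J \<Longrightarrow> j \<in> {1..p}" for j unfolding J_def by auto
  have Lne: "L n \<noteq> {}" for n
  proof -
    obtain y where "y \<in> Gamma h l p (xs n)" using ne by blast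
    then have "y \<in> L n" unfolding L_def Gamma_def J_def by simp
    then show ?thesis by blast
  qed
  have Lcl: "closed (L n)" for n
  proof -
    have "L n = (\<Inter>j\<in>J. {y. h j (xs n) y = 0})" unfolding L_def by auto
    moreover have "closed {y. h j (xs n) y = 0}" if "j \<in> J" for j
      by (rule closed_Collect_eq[OF hcont_y[OF J1[OF that]] continuous_on_const])
    ultimately show ?thesis by (simp add: closed_INT)
  qed
  have qL: "q n \<in> L n" for n unfolding q_def using closest_point_exists(1)[OF Lcl Lne] .
  have qmin: "\<And>y. y \<in> L n \<Longrightarrow> dist yb (q n) \<le> dist yb y" for n
    unfolding q_def using closest_point_exists(2)[OF Lcl Lne] by blast
  have orth: "(yb - q n) \<bullet> d = 0" if d: "\<forall>j\<in>J. G_y f h j (xs n) yb \<bullet> d = 0" for n d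
  proof -
    have inL: "q n + s *\<^sub>R d \<in> L n" for s
    proof -
      have "h j (xs n) (q n + s *\<^sub>R d) = 0" if j: "j \<in> J" for j
      proof -
        have jj: "j \<in> {l+1..p}" using j unfolding J_def .
        have "h j (xs n) (q n + s *\<^sub>R d) = h j (xs n) (q n) + G_y f h j (xs n) (q n) \<bullet> (s *\<^sub>R d)"
          using aff_h[OF jj, of "xs n" "q n + s *\<^sub>R d" "q n"] by simp
        also have "G_y f h j (xs n) (q n) = G_y f h j (xs n) yb" using aff_G[OF jj] by blast
        finally show ?thesis using qL[of n] d j unfolding L_def by simp
      qed
      then show ?thesis unfolding L_def by simp
    qed
    have "\<forall>s. 2 * s * ((yb - q n) \<bullet> d) \<le> s\<^sup>2 * (d \<bullet> d)"
    proof
      fix s :: real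
      have "dist yb (q n) \<le> dist yb (q n + s *\<^sub>R d)" by (rule qmin[OF inL])
      then have "norm (yb - q n) \<le> norm ((yb - q n) - s *\<^sub>R d)" by (simp add: dist_norm algebra_simps)
      then have A: "(norm (yb - q n))\<^sup>2 \<le> (norm ((yb - q n) - s *\<^sub>R d))\<^sup>2" by (simp add: power_mono)
      have B: "(norm ((yb - q n) - s *\<^sub>R d))\<^sup>2 = (norm (yb - q n))\<^sup>2 - 2 * s * ((yb - q n) \<bullet> d) + s\<^sup>2 * (d \<bullet> d)"
        unfolding power2_norm_eq_inner by (simp add: inner_diff_left inner_diff_right inner_commute power2_eq_square algebra_simps)
      show "2 * s * ((yb - q n) \<bullet> d) \<le> s\<^sup>2 * (d \<bullet> d)" using A B by linarith
    qed
    then show ?thesis by (rule quad_zero) simp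
  qed
  define M where "M n = (\<Sum>t\<in>T. \<bar>h t (xs n) yb\<bar>)" for n
  obtain N where N: "\<And>n. n \<ge> N \<Longrightarrow> (\<forall>lam. c0 * (\<Sum>t\<in>T. \<bar>lam t\<bar>) \<le> norm (\<Sum>t\<in>T. lam t *\<^sub>R G_y f h t (xs n) yb))
      \<and> span ((\<lambda>t. G_y f h t (xs n) yb) ` T) = span ((\<lambda>t. G_y f h t (xs n) yb) ` {l+1..p})"
    using eventually_conj[OF UI spanJT] unfolding eventually_sequentially by blast
  have bound: "norm (yb - q n) \<le> M n / c0" if nN: "n \<ge> N" for n
  proof -
    define AJ where "AJ = (\<lambda>t. G_y f h t (xs n) yb) ` J"
    obtain sv ov where so: "sv \<in> span AJ" "\<And>w. w \<in> span AJ \<Longrightarrow> orthogonal ov w" "yb - q n = sv + ov"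
      using orthogonal_subspace_decomp_exists[of AJ "yb - q n"] by blast
    have "\<forall>j\<in>J. G_y f h j (xs n) yb \<bullet> ov = 0"
    proof
      fix j assume "j \<in> J"
      then have "orthogonal ov (G_y f h j (xs n) yb)" using so(2) span_base unfolding AJ_def by blast
      then show "G_y f h j (xs n) yb \<bullet> ov = 0" unfolding orthogonal_def by (simp add: inner_commute)
    qed
    from orth[OF this] have "(sv + ov) \<bullet> ov = 0" using so(3) by simp
    moreover have "sv \<bullet> ov = 0" using so(2)[OF so(1)] unfolding orthogonal_def by (simp add: inner_commute)
    ultimately have "ov \<bullet> ov = 0" by (simp add: inner_add_left)
    then have "ov = 0" by simp
    then have "yb - q n \<in> span AJ" using so(1,3) by simp
    then have inspan: "yb - q n \<in> span ((\<lambda>t. G_y f h t (xs n) yb) ` T)"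
      using N[OF nN] unfolding AJ_def J_def by simp
    have UIn: "\<forall>lam. c0 * (\<Sum>t\<in>T. \<bar>lam t\<bar>) \<le> norm (\<Sum>t\<in>T. lam t *\<^sub>R G_y f h t (xs n) yb)"
      using N[OF nN] by blast
    have inj: "inj_on (\<lambda>t. G_y f h t (xs n) yb) T"
      by (rule not_fld_inj[OF finT UI_not_fld[OF c0 UIn finT]])
    obtain lam where lam: "yb - q n = (\<Sum>t\<in>T. lam t *\<^sub>R G_y f h t (xs n) yb)"
      using span_fam[OF finT inj inspan] by blast
    have at: "G_y f h t (xs n) yb \<bullet> (yb - q n) = h t (xs n) yb" if t: "t \<in> T" for t
    proof -
      have tt: "t \<in> {l+1..p}" using t TJ by blast
      have "h t (xs n) yb = h t (xs n) (q n) + G_y f h t (xs n) (q n) \<bullet> (yb - q n)"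
        using aff_h[OF tt] by blast
      moreover have "h t (xs n) (q n) = 0" using qL[of n] tt unfolding L_def J_def by simp
      moreover have "G_y f h t (xs n) (q n) = G_y f h t (xs n) yb" using aff_G[OF tt] by blast
      ultimately show ?thesis by simp
    qed
    have "(norm (yb - q n))\<^sup>2 = (yb - q n) \<bullet> (\<Sum>t\<in>T. lam t *\<^sub>R G_y f h t (xs n) yb)"
      using lam by (metis power2_norm_eq_inner)
    also have "\<dots> = (\<Sum>t\<in>T. lam t * ((yb - q n) \<bullet> G_y f h t (xs n) yb))"
      by (simp add: inner_sum_right)
    also have "\<dots> = (\<Sum>t\<in>T. lam t * h t (xs n) yb)"
      by (rule sum.cong) (use at in \<open>auto simp: inner_commute\<close>)
    also have "\<dots> \<le> (\<Sum>t\<in>T. \<bar>lam t\<bar> * M n)"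
    proof (rule sum_mono)
      fix t assume t: "t \<in> T"
      have "\<bar>h t (xs n) yb\<bar> \<le> M n" unfolding M_def by (rule member_le_sum) (use t finT in auto)
      then have "\<bar>lam t\<bar> * \<bar>h t (xs n) yb\<bar> \<le> \<bar>lam t\<bar> * M n" by (simp add: mult_left_mono)
      moreover have "lam t * h t (xs n) yb \<le> \<bar>lam t\<bar> * \<bar>h t (xs n) yb\<bar>" by (simp add: abs_mult[symmetric])
      ultimately show "lam t * h t (xs n) yb \<le> \<bar>lam t\<bar> * M n" by linarith
    qed
    also have "\<dots> = (\<Sum>t\<in>T. \<bar>lam t\<bar>) * M n" by (simp add: sum_distrib_right)
    finally have sq: "(norm (yb - q n))\<^sup>2 \<le> (\<Sum>t\<in>T. \<bar>lam t\<bar>) * M n" .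
    have lo: "c0 * (\<Sum>t\<in>T. \<bar>lam t\<bar>) \<le> norm (yb - q n)" using UIn lam by simp
    have Mnn: "M n \<ge> 0" unfolding M_def by (simp add: sum_nonneg)
    have "c0 * (norm (yb - q n))\<^sup>2 \<le> norm (yb - q n) * M n"
    proof -
      have "c0 * (norm (yb - q n))\<^sup>2 \<le> c0 * ((\<Sum>t\<in>T. \<bar>lam t\<bar>) * M n)" using sq c0 by simp
      also have "\<dots> = (c0 * (\<Sum>t\<in>T. \<bar>lam t\<bar>)) * M n" by simp
      also have "\<dots> \<le> norm (yb - q n) * M n" using lo Mnn by (rule mult_right_mono)
      finally show ?thesis .
    qed
    then have "c0 * norm (yb - q n) \<le> M n"
      by (cases "norm (yb - q n) = 0") (use Mnn in \<open>auto simp: power2_eq_square\<close>)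
    then show ?thesis using c0 by (simp add: pos_le_divide_eq mult.commute)
  qed
  have "(\<lambda>n. M n / c0) \<longlonglongrightarrow> (\<Sum>t\<in>T. \<bar>h t xb yb\<bar>) / c0"
    unfolding M_def
    by (intro tendsto_divide tendsto_sum tendsto_rabs htend[OF _ xs tendsto_const] tendsto_const) (use TJ c0 in auto)
  moreover have "(\<Sum>t\<in>T. \<bar>h t xb yb\<bar>) = 0"
    using ybG TJ unfolding Gamma_def by (intro sum.neutral) auto
  ultimately have M0: "(\<lambda>n. M n / c0) \<longlonglongrightarrow> 0" by simp
  have "(\<lambda>n. norm (q n - yb)) \<longlonglongrightarrow> 0"
  proof (rule real_tendsto_sandwich[of "\<lambda>n. 0" _ _ "\<lambda>n. M n / c0"])
    show "\<forall>\<^sub>F n in sequentially. 0 \<le> norm (q n - yb)" by simp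
    show "\<forall>\<^sub>F n in sequentially. norm (q n - yb) \<le> M n / c0"
      unfolding eventually_sequentially using bound by (metis norm_minus_commute)
  qed (simp, rule M0)
  then have "q \<longlonglongrightarrow> yb" by (simp add: tendsto_norm_zero_iff LIM_zero_iff)
  then show ?thesis unfolding q_def L_def J_def .
qed

end



context setting begin

lemma core:
  fixes xs :: "nat \<Rightarrow> 'a" and ws :: "nat \<Rightarrow> 'b"
  assumes yb: "yb \<in> Sol f h l p xb" and xs: "xs \<longlonglongrightarrow> xb" and ws: "ws \<longlonglongrightarrow> wb"
    and wsS: "\<forall>n. ws n \<in> Sol f h l p (xs n)" and dpos: "\<delta> > 0"
    and far: "\<forall>n. Sol f h l p (xs n) \<inter> ball yb \<delta> = {}"
  shows False
proof -
  define J where "J = {l+1..p}"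
  define \<Omega> where "\<Omega> = dom_map (Gamma h l p)"
  define G where "G = G_y f h"
  have ybG: "yb \<in> Gamma h l p xb" using yb unfolding Sol_def by simp
  have wsG: "ws n \<in> Gamma h l p (xs n)" for n using wsS unfolding Sol_def by simp
  have xsO: "xs n \<in> \<Omega>" for n using wsG unfolding \<Omega>_def dom_map_def by blast
  have xbO: "xb \<in> \<Omega>" using xb_dom unfolding \<Omega>_def .
  have finJ: "finite J" unfolding J_def by simp
  have wbG: "wb \<in> Gamma h l p xb"
  proof -
    have "h i xb wb \<le> 0" if i: "i \<in> {1..l}" for i
    proof -
      have "(\<lambda>n. h i (xs n) (ws n)) \<longlonglongrightarrow> h i xb wb" by (rule htend) (use i lp xs ws in auto)
      moreover have "\<forall>\<^sub>F n in sequentially. h i (xs n) (ws n) \<le> 0" using wsG i unfolding Gamma_def by simp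
      ultimately show ?thesis by (rule tendsto_upperbound) simp
    qed
    moreover have "h i xb wb = 0" if i: "i \<in> {l+1..p}" for i
    proof -
      have "(\<lambda>n. h i (xs n) (ws n)) \<longlonglongrightarrow> h i xb wb" by (rule htend) (use i xs ws in auto)
      moreover have "(\<lambda>n. h i (xs n) (ws n)) = (\<lambda>n. 0)" using wsG i unfolding Gamma_def by simp
      ultimately show ?thesis using LIMSEQ_unique[OF _ tendsto_const] by metis
    qed
    ultimately show ?thesis unfolding Gamma_def by simp
  qed
  have fyw: "f xb yb \<le> f xb wb" using Sol_min[OF yb wbG] .
  have "RCPLD_S f h l p \<Omega> xb yb" using RC yb unfolding \<Omega>_def by blast
  then have "\<exists>U T. open U \<and> (xb, yb) \<in> U \<and> T \<subseteq> J \<and>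
      \<not> fam_lin_dep (\<lambda>i. G i xb yb) T \<and>
      span ((\<lambda>i. G i xb yb) ` T) = span ((\<lambda>i. G i xb yb) ` J) \<and>
      (\<exists>r. \<forall>(x, y) \<in> U \<inter> (\<Omega> \<times> UNIV). dim ((\<lambda>i. G i x y) ` J) = r) \<and>
      (\<forall>K. K \<subseteq> {0} \<union> {i\<in>{1..l}. h i xb yb = 0} \<longrightarrow>
          pos_lin_dep (\<lambda>i. G i xb yb) K (\<lambda>i. G i xb yb) T \<longrightarrow>
          (\<forall>(x, y) \<in> U \<inter> (\<Omega> \<times> UNIV). fam_lin_dep (\<lambda>i. G i x y) (K \<union> T)))"
    unfolding RCPLD_S_def G_def J_def .
  then obtain U T where U: "open U" "(xb, yb) \<in> U" and TJ: "T \<subseteq> J"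
    and indT: "\<not> fam_lin_dep (\<lambda>i. G i xb yb) T"
    and spT: "span ((\<lambda>i. G i xb yb) ` T) = span ((\<lambda>i. G i xb yb) ` J)"
    and rank0: "\<exists>r. \<forall>(x, y) \<in> U \<inter> (\<Omega> \<times> UNIV). dim ((\<lambda>i. G i x y) ` J) = r"
    and RC3: "\<forall>K. K \<subseteq> {0} \<union> {i\<in>{1..l}. h i xb yb = 0} \<longrightarrow>
          pos_lin_dep (\<lambda>i. G i xb yb) K (\<lambda>i. G i xb yb) T \<longrightarrow>
          (\<forall>(x, y) \<in> U \<inter> (\<Omega> \<times> UNIV). fam_lin_dep (\<lambda>i. G i x y) (K \<union> T))"
    by (elim exE conjE) (rule that; (assumption | blast))
  obtain r where rank: "\<And>x y. (x, y) \<in> U \<Longrightarrow> x \<in> \<Omega> \<Longrightarrow> dim ((\<lambda>i. G i x y) ` J) = r"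
    using rank0 by blast
  have finT: "finite T" using TJ finJ finite_subset by blast
  have TJ': "T \<subseteq> {l+1..p}" using TJ unfolding J_def .
  have contT: "\<forall>t\<in>T. isCont (\<lambda>x. G t x yb) xb"
  proof
    fix t assume "t \<in> T"
    then have t: "t \<in> {0..p}" using TJ unfolding J_def by auto
    have "continuous_on UNIV ((\<lambda>z. G t (fst z) (snd z)) \<circ> (\<lambda>x. (x, yb)))"
      by (rule continuous_on_compose) (auto intro!: continuous_intros Gcont[OF t, folded G_def]
          intro: continuous_on_subset)
    then have "continuous_on UNIV (\<lambda>x. G t x yb)" by (simp add: o_def)
    then show "isCont (\<lambda>x. G t x yb) xb" using continuous_on_eq_continuous_at by blast
  qed
  obtain c0 \<eta>0 where c0: "c0 > 0" and eta0: "\<eta>0 > 0"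
    and UI: "\<And>x lam. dist x xb < \<eta>0 \<Longrightarrow> c0 * (\<Sum>t\<in>T. \<bar>lam t\<bar>) \<le> norm (\<Sum>t\<in>T. lam t *\<^sub>R G t x yb)"
    using unif_indep[OF finT contT indT] by blast
  have ev_dist: "\<forall>\<^sub>F n in sequentially. dist (xs n) xb < \<eta>0"
    using xs eta0 by (rule tendstoD)
  have ev_U: "\<forall>\<^sub>F n in sequentially. (xs n, yb) \<in> U"
    using tendsto_Pair[OF xs tendsto_const[of yb]] U by (rule topological_tendstoD)
  have UIev: "\<forall>\<^sub>F n in sequentially. \<forall>lam. c0 * (\<Sum>t\<in>T. \<bar>lam t\<bar>) \<le> norm (\<Sum>t\<in>T. lam t *\<^sub>R G t (xs n) yb)"
    using ev_dist by eventually_elim (use UI in blast)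
  have dimT: "dim ((\<lambda>i. G i xb yb) ` J) = card T"
  proof -
    have "dim ((\<lambda>i. G i xb yb) ` J) = dim ((\<lambda>i. G i xb yb) ` T)" using span_eq_dim[OF spT] by simp
    also have "\<dots> = card ((\<lambda>i. G i xb yb) ` T)" by (rule dim_eq_card_independent[OF not_fld_indep[OF finT indT]])
    also have "\<dots> = card T" by (rule card_image[OF not_fld_inj[OF finT indT]])
    finally show ?thesis .
  qed
  have rT: "r = card T" using rank[OF U(2) xbO] dimT by simp
  have spanJT: "\<forall>\<^sub>F n in sequentially. span ((\<lambda>t. G t (xs n) yb) ` T) = span ((\<lambda>t. G t (xs n) yb) ` J)"
    using ev_dist ev_U
  proof eventually_elim
    case (elim n)
    have indn: "\<not> fam_lin_dep (\<lambda>t. G t (xs n) yb) T"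
      by (rule UI_not_fld[OF c0 _ finT]) (use UI elim(1) in blast)
    have "dim ((\<lambda>t. G t (xs n) yb) ` T) = card ((\<lambda>t. G t (xs n) yb) ` T)"
      by (rule dim_eq_card_independent[OF not_fld_indep[OF finT indn]])
    also have "\<dots> = card T" by (rule card_image[OF not_fld_inj[OF finT indn]])
    also have "\<dots> = dim ((\<lambda>t. G t (xs n) yb) ` J)" using rank[OF elim(2) xsO] rT by simp
    finally have "dim ((\<lambda>t. G t (xs n) yb) ` J) \<le> dim ((\<lambda>t. G t (xs n) yb) ` T)" by simp
    moreover have "(\<lambda>t. G t (xs n) yb) ` T \<subseteq> (\<lambda>t. G t (xs n) yb) ` J" using TJ by blast
    ultimately show ?case using dim_eq_span by blast
  qed
  define L where "L n = {y. \<forall>j\<in>J. h j (xs n) y = 0}" for n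
  define q where "q n = closest_point (L n) yb" for n
  have qlim: "q \<longlonglongrightarrow> yb"
    unfolding q_def L_def J_def
    by (rule q_lemma[OF xs ybG TJ' c0]) (use UIev spanJT wsG in \<open>auto simp: G_def J_def\<close>)
  define fn where "fn n = f (xs n) (ws n)" for n
  define gg where "gg i n y = (if i = 0 then f (xs n) y - fn n else h i (xs n) y)" for i n y
  define I where "I = {0..l}"
  define R where "R n y = sqrt (\<Sum>i\<in>I. (max (gg i n y) 0)\<^sup>2)" for n y
  have finI: "finite I" unfolding I_def by simp
  have I1: "i \<in> I \<Longrightarrow> i \<noteq> 0 \<Longrightarrow> i \<in> {1..l}" for i unfolding I_def by auto
  have Ip: "i \<in> I \<Longrightarrow> i \<in> {0..p}" for i unfolding I_def using lp by auto
  have J1: "j \<in> J \<Longrightarrow> j \<in> {1..p}" for j unfolding J_def by auto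
  have IJ: "I \<inter> J = {}" unfolding I_def J_def by auto
  have ggcont: "continuous_on UNIV (gg i n)" if i: "i \<in> I" for i n
  proof (cases "i = 0")
    case True
    then show ?thesis unfolding gg_def by (simp add: continuous_intros fcont_y)
  next
    case False
    then have "gg i n = h i (xs n)" unfolding gg_def by (simp add: fun_eq_iff)
    moreover have "i \<in> {1..p}" using I1[OF i False] lp by auto
    ultimately show ?thesis using hcont_y by simp
  qed
  have Rcont: "continuous_on UNIV (R n)" for n
    unfolding R_def by (intro continuous_intros ggcont) auto
  have Rnn: "R n y \<ge> 0" for n y unfolding R_def by (simp add: sum_nonneg)
  have ggder: "(gg i n has_derivative (\<lambda>w. G i (xs n) y \<bullet> w)) (at y)" if i: "i \<in> I" for i n y
  proof (cases "i = 0")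
    case True
    have "((\<lambda>y. f (xs n) y - fn n) has_derivative (\<lambda>w. G 0 (xs n) y \<bullet> w - 0)) (at y)"
      by (rule has_derivative_diff[OF fder[folded G_def] has_derivative_const])
    then show ?thesis using True unfolding gg_def by simp
  next
    case False
    then have "gg i n = h i (xs n)" unfolding gg_def by (simp add: fun_eq_iff)
    moreover have "i \<in> {1..p}" using I1[OF i False] lp by auto
    ultimately show ?thesis using hder[folded G_def] by simp
  qed
  have Lne: "ws n \<in> L n" for n using wsG[of n] unfolding L_def Gamma_def J_def by simp
  have Lcl: "closed (L n)" for n
  proof -
    have "L n = (\<Inter>j\<in>J. {y. h j (xs n) y = 0})" unfolding L_def by auto
    moreover have "closed {y. h j (xs n) y = 0}" if "j \<in> J" for j
      by (rule closed_Collect_eq[OF hcont_y[OF J1[OF that]] continuous_on_const])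
    ultimately show ?thesis by (simp add: closed_INT)
  qed
  have qL: "q n \<in> L n" for n unfolding q_def using closest_point_exists(1)[OF Lcl] Lne by blast
  have inSol: "y \<in> Sol f h l p (xs n)" if y: "y \<in> L n" "R n y = 0" for n y
  proof -
    have "(\<Sum>i\<in>I. (max (gg i n y) 0)\<^sup>2) = 0" using y(2) unfolding R_def by simp
    then have "\<forall>i\<in>I. (max (gg i n y) 0)\<^sup>2 = 0"
      using sum_nonneg_eq_0_iff[OF finI, of "\<lambda>i. (max (gg i n y) 0)\<^sup>2"] by simp
    then have gle: "\<forall>i\<in>I. gg i n y \<le> 0" by (auto simp: max_def split: if_splits)
    have yG: "y \<in> Gamma h l p (xs n)"
    proof -
      have "h i (xs n) y \<le> 0" if "i \<in> {1..l}" for i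
      proof -
        have i: "i \<in> I" "i \<noteq> 0" using that unfolding I_def by auto
        from gle i(1) have "gg i n y \<le> 0" by blast
        then show ?thesis using i(2) unfolding gg_def by simp
      qed
      moreover have "h i (xs n) y = 0" if "i \<in> {l+1..p}" for i
        using y(1) that unfolding L_def J_def by auto
      ultimately show ?thesis unfolding Gamma_def by simp
    qed
    have fle: "f (xs n) y \<le> f (xs n) (ws n)"
    proof -
      have "0 \<in> I" unfolding I_def by simp
      with gle have "gg 0 n y \<le> 0" by blast
      then show ?thesis unfolding gg_def fn_def by simp
    qed
    have wsn: "ws n \<in> Sol f h l p (xs n)" using wsS by blast
    show ?thesis by (rule Sol_char[OF yG wsn fle])
  qed
  define rr where "rr n = R n (q n)" for n
  have rlim: "rr \<longlonglongrightarrow> 0"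
  proof -
    define gl where "gl i = (if i = 0 then f xb yb - f xb wb else h i xb yb)" for i
    have gtend: "(\<lambda>n. gg i n (q n)) \<longlonglongrightarrow> gl i" if i: "i \<in> I" for i
    proof (cases "i = 0")
      case True
      have "(\<lambda>n. f (xs n) (q n) - f (xs n) (ws n)) \<longlonglongrightarrow> f xb yb - f xb wb"
        by (intro tendsto_diff ftend xs qlim ws)
      then show ?thesis using True unfolding gg_def gl_def fn_def by simp
    next
      case False
      have "(\<lambda>n. h i (xs n) (q n)) \<longlonglongrightarrow> h i xb yb"
        by (rule htend[OF _ xs qlim]) (use I1[OF i False] lp in auto)
      then show ?thesis using False unfolding gg_def gl_def by simp
    qed
    have glle: "gl i \<le> 0" if i: "i \<in> I" for i
      using fyw ybG I1[OF i] unfolding gl_def Gamma_def by auto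
    have "(\<lambda>n. sqrt (\<Sum>i\<in>I. (max (gg i n (q n)) 0)\<^sup>2)) \<longlonglongrightarrow> sqrt (\<Sum>i\<in>I. (max (gl i) 0)\<^sup>2)"
      by (intro tendsto_real_sqrt tendsto_sum tendsto_power tendsto_max tendsto_const gtend)
    moreover have "(\<Sum>i\<in>I. (max (gl i) 0)\<^sup>2) = 0" using glle by (intro sum.neutral) (auto simp: max_def)
    ultimately show ?thesis unfolding rr_def R_def by simp
  qed
  define \<rho> where "\<rho> n = sqrt (rr n)" for n
  define \<epsilon> where "\<epsilon> n = 2 * sqrt (rr n)" for n
  define KS where "KS n = cball (q n) (\<rho> n) \<inter> L n" for n
  define \<Phi> where "\<Phi> n y = R n y + \<epsilon> n * norm (y - q n)" for n y
  have exz: "\<forall>n. \<exists>z\<in>KS n. \<forall>y\<in>KS n. \<Phi> n z \<le> \<Phi> n y"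
  proof
    fix n
    have "compact (KS n)" unfolding KS_def by (rule compact_Int_closed[OF compact_cball Lcl])
    moreover have "q n \<in> KS n" unfolding KS_def \<rho>_def rr_def using qL Rnn[of n "q n"] by simp
    moreover have "continuous_on (KS n) (\<Phi> n)"
      unfolding \<Phi>_def by (intro continuous_intros continuous_on_subset[OF Rcont]) auto
    ultimately show "\<exists>z\<in>KS n. \<forall>y\<in>KS n. \<Phi> n z \<le> \<Phi> n y"
      using continuous_attains_inf by blast
  qed
  have exz': "\<forall>n. \<exists>z. z \<in> KS n \<and> (\<forall>y\<in>KS n. \<Phi> n z \<le> \<Phi> n y)" using exz by blast
  obtain z where zz: "\<forall>n. z n \<in> KS n \<and> (\<forall>y\<in>KS n. \<Phi> n (z n) \<le> \<Phi> n y)"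
    using choice[OF exz'] by (elim exE) (rule that)
  have zK: "\<And>n. z n \<in> KS n" and zmin: "\<And>n y. y \<in> KS n \<Longrightarrow> \<Phi> n (z n) \<le> \<Phi> n y"
    using zz by blast+
  have zL: "z n \<in> L n" for n using zK[of n] unfolding KS_def by simp
  have rpos: "rr n > 0" if "dist (q n) yb < \<delta>" for n
  proof (rule ccontr)
    assume "\<not> rr n > 0"
    then have "R n (q n) = 0" using Rnn[of n "q n"] unfolding rr_def by simp
    then have "q n \<in> Sol f h l p (xs n)" using inSol qL by blast
    moreover have "q n \<in> ball yb \<delta>" using that by (simp add: dist_commute)
    ultimately show False using far by blast
  qed
  have zq: "norm (z n - q n) \<le> \<rho> n / 2" if "rr n > 0" for n
  proof -
    have "q n \<in> KS n" unfolding KS_def \<rho>_def rr_def using qL Rnn[of n "q n"] by simp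
    then have "\<Phi> n (z n) \<le> \<Phi> n (q n)" by (rule zmin)
    then have "\<epsilon> n * norm (z n - q n) \<le> rr n" unfolding \<Phi>_def rr_def using Rnn[of n "z n"] by simp
    then have E: "sqrt (rr n) * (2 * norm (z n - q n)) \<le> rr n" unfolding \<epsilon>_def by (simp add: algebra_simps)
    define sr where "sr = sqrt (rr n)"
    have sr: "sr > 0" "sr * sr = rr n" unfolding sr_def using that by simp_all
    have "sr * (2 * norm (z n - q n)) \<le> sr * sr" using E sr(2) unfolding sr_def[symmetric] by simp
    then have "2 * norm (z n - q n) \<le> sr" using mult_left_le_imp_le[OF _ sr(1)] by blast
    then have "2 * norm (z n - q n) \<le> sqrt (rr n)" unfolding sr_def .
    then show ?thesis unfolding \<rho>_def by simp
  qed
  have ev_q: "\<forall>\<^sub>F n in sequentially. dist (q n) yb < \<delta>" using qlim dpos by (rule tendstoD)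
  have rholim: "\<rho> \<longlonglongrightarrow> 0" unfolding \<rho>_def using tendsto_real_sqrt[OF rlim] by simp
  have epslim: "\<epsilon> \<longlonglongrightarrow> 0" unfolding \<epsilon>_def using tendsto_mult_right_zero[OF rholim[unfolded \<rho>_def], of 2] by simp
  have zlim: "z \<longlonglongrightarrow> yb"
  proof -
    have "(\<lambda>n. z n - q n) \<longlonglongrightarrow> 0"
    proof (rule Lim_null_comparison)
      show "\<forall>\<^sub>F n in sequentially. norm (z n - q n) \<le> \<rho> n / 2"
        using ev_q by eventually_elim (use zq rpos in blast)
      show "(\<lambda>n. \<rho> n / 2) \<longlonglongrightarrow> 0" using tendsto_divide_zero[OF rholim] by simp
    qed
    from tendsto_add[OF this qlim] show ?thesis by simp
  qed
  have ev_z: "\<forall>\<^sub>F n in sequentially. dist (z n) yb < \<delta>" using zlim dpos by (rule tendstoD)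
  have Rzpos: "R n (z n) > 0" if "dist (z n) yb < \<delta>" for n
  proof (rule ccontr)
    assume "\<not> R n (z n) > 0"
    then have "R n (z n) = 0" using Rnn[of n "z n"] by simp
    then have "z n \<in> Sol f h l p (xs n)" using inSol zL by blast
    moreover have "z n \<in> ball yb \<delta>" using that by (simp add: dist_commute)
    ultimately show False using far by blast
  qed
  define u where "u n i = max (gg i n (z n)) 0 / R n (z n)" for n i
  define \<gamma> where "\<gamma> n = (\<Sum>i\<in>I. u n i *\<^sub>R G i (xs n) (z n))" for n
  have stat: "- (\<epsilon> n * norm d) \<le> \<gamma> n \<bullet> d"
    if n: "rr n > 0" "R n (z n) > 0" and d: "\<forall>j\<in>J. G j (xs n) yb \<bullet> d = 0" for n d
  proof -
    have rho: "\<rho> n > 0" unfolding \<rho>_def using n(1) by simp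
    define t0 where "t0 = (\<rho> n / 2) / (norm d + 1)"
    have t0: "t0 > 0" unfolding t0_def using rho by (simp add: add_nonneg_pos)
    have minim: "\<forall>t. 0 < t \<and> t < t0 \<longrightarrow> R n (z n) + \<epsilon> n * norm (z n - q n)
        \<le> R n (z n + t *\<^sub>R d) + \<epsilon> n * norm (z n + t *\<^sub>R d - q n)"
    proof (intro allI impI)
      fix t assume t: "0 < t \<and> t < t0"
      have "z n + t *\<^sub>R d \<in> KS n"
      proof -
        have "norm (z n + t *\<^sub>R d - q n) \<le> norm (z n - q n) + t * norm d"
          using norm_triangle_ineq[of "z n - q n" "t *\<^sub>R d"] t by (simp add: algebra_simps)
        also have "t * norm d \<le> \<rho> n / 2"
        proof -
          have "t * norm d \<le> t0 * norm d" using t by (simp add: mult_right_mono)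
          also have "\<dots> \<le> t0 * (norm d + 1)" using t0 by (simp add: mult_left_mono)
          also have "\<dots> = \<rho> n / 2" unfolding t0_def
            using add_nonneg_pos[OF norm_ge_zero[of d] zero_less_one] by (simp add: field_simps)
          finally show ?thesis .
        qed
        finally have "norm (z n + t *\<^sub>R d - q n) \<le> \<rho> n" using zq[OF n(1)] by simp
        then have "z n + t *\<^sub>R d \<in> cball (q n) (\<rho> n)" by (simp add: dist_norm norm_minus_commute)
        moreover have "z n + t *\<^sub>R d \<in> L n"
        proof -
          have "h j (xs n) (z n + t *\<^sub>R d) = 0" if j: "j \<in> J" for j
          proof -
            have jj: "j \<in> {l+1..p}" using j unfolding J_def .
            have "h j (xs n) (z n + t *\<^sub>R d) = h j (xs n) (z n) + G j (xs n) (z n) \<bullet> (t *\<^sub>R d)"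
              using aff_h[OF jj, of "xs n" "z n + t *\<^sub>R d" "z n"] unfolding G_def by simp
            also have "G j (xs n) (z n) = G j (xs n) yb" using aff_G[OF jj] unfolding G_def by blast
            finally show ?thesis using zL[of n] d j unfolding L_def by simp
          qed
          then show ?thesis unfolding L_def by simp
        qed
        ultimately show ?thesis unfolding KS_def by simp
      qed
      then show "R n (z n) + \<epsilon> n * norm (z n - q n) \<le> R n (z n + t *\<^sub>R d) + \<epsilon> n * norm (z n + t *\<^sub>R d - q n)"
        using zmin unfolding \<Phi>_def by blast
    qed
    have "- (\<epsilon> n * R n (z n) * norm d) \<le> (\<Sum>i\<in>I. max (gg i n (z n)) 0 * (G i (xs n) (z n) \<bullet> d))"
    proof (rule stationarity[OF finI _ _ _ t0 minim])
      show "\<forall>i\<in>I. (gg i n has_derivative (\<lambda>w. G i (xs n) (z n) \<bullet> w)) (at (z n))" using ggder by blast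
      show "\<forall>y. R n y = sqrt (\<Sum>i\<in>I. (max (gg i n y) 0)\<^sup>2)" unfolding R_def by simp
      show "0 \<le> \<epsilon> n" unfolding \<epsilon>_def using n(1) by simp
    qed
    moreover have "\<gamma> n \<bullet> d = (\<Sum>i\<in>I. max (gg i n (z n)) 0 * (G i (xs n) (z n) \<bullet> d)) / R n (z n)"
      unfolding \<gamma>_def u_def by (simp add: inner_sum_left sum_divide_distrib)
    ultimately show ?thesis using n(2) by (simp add: le_divide_eq mult_ac)
  qed
  define good where "good n \<longleftrightarrow> dist (q n) yb < \<delta> \<and> dist (z n) yb < \<delta> \<and>
      (\<forall>lam. c0 * (\<Sum>t\<in>T. \<bar>lam t\<bar>) \<le> norm (\<Sum>t\<in>T. lam t *\<^sub>R G t (xs n) yb)) \<and>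
      span ((\<lambda>t. G t (xs n) yb) ` T) = span ((\<lambda>t. G t (xs n) yb) ` J)" for n
  have ev_good: "\<forall>\<^sub>F n in sequentially. good n"
    using ev_q ev_z UIev spanJT unfolding good_def by eventually_elim blast
  have decomp: "\<exists>wc ov. \<gamma> n = (\<Sum>t\<in>T. wc t *\<^sub>R G t (xs n) yb) + ov \<and> norm ov \<le> \<epsilon> n"
    if gn: "good n" for n
  proof -
    have rn: "rr n > 0" using rpos gn unfolding good_def by blast
    have Rn: "R n (z n) > 0" using Rzpos gn unfolding good_def by blast
    define AJ where "AJ = (\<lambda>t. G t (xs n) yb) ` J"
    obtain sv ov where so: "sv \<in> span AJ" "\<And>w. w \<in> span AJ \<Longrightarrow> orthogonal ov w" "\<gamma> n = sv + ov"
      using orthogonal_subspace_decomp_exists[of AJ "\<gamma> n"] by blast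
    have ker: "\<forall>j\<in>J. G j (xs n) yb \<bullet> (- ov) = 0"
    proof
      fix j assume "j \<in> J"
      then have "orthogonal ov (G j (xs n) yb)" using so(2) span_base unfolding AJ_def by blast
      then show "G j (xs n) yb \<bullet> (- ov) = 0" unfolding orthogonal_def by (simp add: inner_commute)
    qed
    have svo: "sv \<bullet> ov = 0" using so(2)[OF so(1)] unfolding orthogonal_def by (simp add: inner_commute)
    have "- (\<epsilon> n * norm (- ov)) \<le> \<gamma> n \<bullet> (- ov)" by (rule stat[OF rn Rn ker])
    also have "\<gamma> n \<bullet> (- ov) = - (ov \<bullet> ov)" using so(3) svo by (simp add: inner_add_left)
    finally have "ov \<bullet> ov \<le> \<epsilon> n * norm ov" by simp
    then have "norm ov * norm ov \<le> \<epsilon> n * norm ov" by (simp add: dot_square_norm power2_eq_square)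
    then have ovb: "norm ov \<le> \<epsilon> n"
      using \<epsilon>_def rn by (cases "norm ov = 0") (auto simp: mult_le_cancel_right)
    have UIn: "\<forall>lam. c0 * (\<Sum>t\<in>T. \<bar>lam t\<bar>) \<le> norm (\<Sum>t\<in>T. lam t *\<^sub>R G t (xs n) yb)"
      using gn unfolding good_def by blast
    have inj: "inj_on (\<lambda>t. G t (xs n) yb) T"
      by (rule not_fld_inj[OF finT UI_not_fld[OF c0 UIn finT]])
    have "sv \<in> span ((\<lambda>t. G t (xs n) yb) ` T)" using so(1) gn unfolding good_def AJ_def by simp
    then obtain wc where "sv = (\<Sum>t\<in>T. wc t *\<^sub>R G t (xs n) yb)" using span_fam[OF finT inj] by blast
    then show ?thesis using so(3) ovb by blast
  qed
  have "\<forall>n. \<exists>wo. good n \<longrightarrow> \<gamma> n = (\<Sum>t\<in>T. fst wo t *\<^sub>R G t (xs n) yb) + snd wo \<and> norm (snd wo) \<le> \<epsilon> n"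
  proof
    fix n
    show "\<exists>wo. good n \<longrightarrow> \<gamma> n = (\<Sum>t\<in>T. fst wo t *\<^sub>R G t (xs n) yb) + snd wo \<and> norm (snd wo) \<le> \<epsilon> n"
    proof (cases "good n")
      case True
      then obtain wc ov where "\<gamma> n = (\<Sum>t\<in>T. wc t *\<^sub>R G t (xs n) yb) + ov \<and> norm ov \<le> \<epsilon> n"
        using decomp by blast
      then show ?thesis by (intro exI[of _ "(wc, ov)"]) simp
    qed simp
  qed
  then obtain WO where WO: "\<forall>n. good n \<longrightarrow> \<gamma> n = (\<Sum>t\<in>T. fst (WO n) t *\<^sub>R G t (xs n) yb) + snd (WO n) \<and> norm (snd (WO n)) \<le> \<epsilon> n"
    by (metis choice)
  define WC where "WC n = fst (WO n)" for n
  define OV where "OV n = snd (WO n)" for n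
  have WCOV: "\<gamma> n = (\<Sum>t\<in>T. WC n t *\<^sub>R G t (xs n) yb) + OV n" "norm (OV n) \<le> \<epsilon> n" if "good n" for n
    using WO that unfolding WC_def OV_def by blast+
  have unn: "u n i \<ge> 0" for n i unfolding u_def using Rnn by simp
  have usq: "(\<Sum>i\<in>I. (u n i)\<^sup>2) = 1" if gn: "good n" for n
  proof -
    have Rn: "R n (z n) > 0" using Rzpos gn unfolding good_def by blast
    have R2: "(R n (z n))\<^sup>2 = (\<Sum>i\<in>I. (max (gg i n (z n)) 0)\<^sup>2)" unfolding R_def by (simp add: sum_nonneg)
    have "(\<Sum>i\<in>I. (u n i)\<^sup>2) = (\<Sum>i\<in>I. (max (gg i n (z n)) 0)\<^sup>2) / (R n (z n))\<^sup>2"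
      unfolding u_def by (simp add: power_divide sum_divide_distrib)
    also have "\<dots> = (R n (z n))\<^sup>2 / (R n (z n))\<^sup>2" using R2 by simp
    also have "\<dots> = 1" using Rn by simp
    finally show ?thesis .
  qed
  have ule1: "u n i \<le> 1" if gn: "good n" and i: "i \<in> I" for n i
  proof -
    have "(u n i)\<^sup>2 \<le> (\<Sum>i\<in>I. (u n i)\<^sup>2)" by (rule member_le_sum) (use i finI in auto)
    then have "(u n i)\<^sup>2 \<le> 1\<^sup>2" using usq[OF gn] by simp
    then show ?thesis using power2_le_imp_le[of "u n i" 1] by simp
  qed
  have Gzlim: "(\<lambda>n. G i (xs n) (z n)) \<longlonglongrightarrow> G i xb yb" if "i \<in> I" for i
    unfolding G_def by (rule Gtend[OF Ip[OF that] xs zlim])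
  define Bg where "Bg = (\<Sum>i\<in>I. norm (G i xb yb) + 1)"
  have ev_Gz: "\<forall>\<^sub>F n in sequentially. \<forall>i\<in>I. norm (G i (xs n) (z n)) \<le> norm (G i xb yb) + 1"
  proof (rule eventually_ball_finite[OF finI], rule ballI)
    fix i assume "i \<in> I"
    from tendsto_norm[OF Gzlim[OF this]]
    have "\<forall>\<^sub>F n in sequentially. norm (G i (xs n) (z n)) < norm (G i xb yb) + 1"
      by (rule order_tendstoD) simp
    then show "\<forall>\<^sub>F n in sequentially. norm (G i (xs n) (z n)) \<le> norm (G i xb yb) + 1"
      by eventually_elim simp
  qed
  have ev_gam: "\<forall>\<^sub>F n in sequentially. norm (\<gamma> n) \<le> Bg"
    using ev_good ev_Gz
  proof eventually_elim
    case (elim n)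
    have "norm (\<gamma> n) \<le> (\<Sum>i\<in>I. norm (u n i *\<^sub>R G i (xs n) (z n)))" unfolding \<gamma>_def by (rule norm_sum)
    also have "\<dots> \<le> Bg" unfolding Bg_def
    proof (rule sum_mono)
      fix i assume i: "i \<in> I"
      have "norm (u n i *\<^sub>R G i (xs n) (z n)) = u n i * norm (G i (xs n) (z n))" using unn by simp
      also have "\<dots> \<le> 1 * norm (G i (xs n) (z n))"
        using ule1[OF elim(1) i] by (intro mult_right_mono) auto
      also have "\<dots> \<le> norm (G i xb yb) + 1" using elim(2) i by simp
      finally show "norm (u n i *\<^sub>R G i (xs n) (z n)) \<le> norm (G i xb yb) + 1" .
    qed
    finally show ?case .
  qed
  have ev_eps: "\<forall>\<^sub>F n in sequentially. \<epsilon> n < 1" using epslim by (rule order_tendstoD) simp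
  define cc where "cc n i = (if i \<in> I then u n i else WC n i)" for n i
  have ev_cc: "\<forall>\<^sub>F n in sequentially. \<forall>i\<in>I \<union> T. \<bar>cc n i\<bar> \<le> 1 + (Bg + 1) / c0"
    using ev_good ev_gam ev_eps
  proof eventually_elim
    case (elim n)
    have "norm (\<Sum>t\<in>T. WC n t *\<^sub>R G t (xs n) yb) = norm (\<gamma> n - OV n)" using WCOV(1)[OF elim(1)] by simp
    also have "\<dots> \<le> norm (\<gamma> n) + norm (OV n)" by (rule norm_triangle_ineq4)
    also have "\<dots> \<le> Bg + 1" using elim(2,3) WCOV(2)[OF elim(1)] by simp
    finally have "c0 * (\<Sum>t\<in>T. \<bar>WC n t\<bar>) \<le> Bg + 1" using elim(1) unfolding good_def by (meson order_trans)
    then have S: "(\<Sum>t\<in>T. \<bar>WC n t\<bar>) \<le> (Bg + 1) / c0" using c0 by (simp add: le_divide_eq mult.commute)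
    show ?case
    proof
      fix i assume i: "i \<in> I \<union> T"
      show "\<bar>cc n i\<bar> \<le> 1 + (Bg + 1) / c0"
      proof (cases "i \<in> I")
        case True
        have "(Bg + 1) / c0 \<ge> 0" unfolding Bg_def using c0 by (simp add: sum_nonneg add_nonneg_nonneg)
        then show ?thesis using True ule1[OF elim(1) True] unn unfolding cc_def by simp
      next
        case False
        then have "i \<in> T" using i by simp
        then have "\<bar>WC n i\<bar> \<le> (\<Sum>t\<in>T. \<bar>WC n t\<bar>)" by (intro member_le_sum) (use finT in auto)
        then show ?thesis using False S unfolding cc_def by simp
      qed
    qed
  qed
  obtain sb Lc where sb: "strict_mono sb" and Lc: "\<forall>i\<in>I \<union> T. (\<lambda>m. cc (sb m) i) \<longlonglongrightarrow> Lc i"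
    using finite_coord_subseq_ev[OF _ ev_cc] finI finT by blast
  have xsb: "(\<lambda>m. xs (sb m)) \<longlonglongrightarrow> xb" using LIMSEQ_subseq_LIMSEQ[OF xs sb] by (simp add: o_def)
  have zsb: "(\<lambda>m. z (sb m)) \<longlonglongrightarrow> yb" using LIMSEQ_subseq_LIMSEQ[OF zlim sb] by (simp add: o_def)
  have esb: "(\<lambda>m. \<epsilon> (sb m)) \<longlonglongrightarrow> 0" using LIMSEQ_subseq_LIMSEQ[OF epslim sb] by (simp add: o_def)
  have gsb: "\<forall>\<^sub>F m in sequentially. good (sb m)" using eventually_subseq[OF sb ev_good] .
  have ulim: "(\<lambda>m. u (sb m) i) \<longlonglongrightarrow> Lc i" if "i \<in> I" for i
  proof -
    have "(\<lambda>m. cc (sb m) i) \<longlonglongrightarrow> Lc i" using Lc that by blast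
    moreover have "(\<lambda>m. cc (sb m) i) = (\<lambda>m. u (sb m) i)" using that unfolding cc_def by simp
    ultimately show ?thesis by simp
  qed
  have wclim: "(\<lambda>m. WC (sb m) t) \<longlonglongrightarrow> Lc t" if "t \<in> T" for t
  proof -
    have tI: "t \<notin> I" using that TJ IJ by blast
    have "(\<lambda>m. cc (sb m) t) \<longlonglongrightarrow> Lc t" using Lc that by blast
    moreover have "(\<lambda>m. cc (sb m) t) = (\<lambda>m. WC (sb m) t)" using tI unfolding cc_def by simp
    ultimately show ?thesis by simp
  qed
  have gamlim: "(\<lambda>m. \<gamma> (sb m)) \<longlonglongrightarrow> (\<Sum>i\<in>I. Lc i *\<^sub>R G i xb yb)"
    unfolding \<gamma>_def
  proof (intro tendsto_sum tendsto_scaleR)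
    fix i assume i: "i \<in> I"
    show "(\<lambda>m. u (sb m) i) \<longlonglongrightarrow> Lc i" by (rule ulim[OF i])
    show "(\<lambda>m. G i (xs (sb m)) (z (sb m))) \<longlonglongrightarrow> G i xb yb"
      unfolding G_def by (rule Gtend[OF Ip[OF i] xsb zsb])
  qed
  have OVlim: "(\<lambda>m. OV (sb m)) \<longlonglongrightarrow> 0"
  proof (rule Lim_null_comparison[OF _ esb])
    show "\<forall>\<^sub>F m in sequentially. norm (OV (sb m)) \<le> \<epsilon> (sb m)"
      using gsb by eventually_elim (rule WCOV(2))
  qed
  have WClim: "(\<lambda>m. (\<Sum>t\<in>T. WC (sb m) t *\<^sub>R G t (xs (sb m)) yb) + OV (sb m)) \<longlonglongrightarrow> (\<Sum>t\<in>T. Lc t *\<^sub>R G t xb yb) + 0"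
  proof (intro tendsto_add OVlim tendsto_sum tendsto_scaleR)
    fix t assume t: "t \<in> T"
    show "(\<lambda>m. WC (sb m) t) \<longlonglongrightarrow> Lc t" by (rule wclim[OF t])
    have "t \<in> {0..p}" using t TJ unfolding J_def by auto
    then show "(\<lambda>m. G t (xs (sb m)) yb) \<longlonglongrightarrow> G t xb yb"
      unfolding G_def by (rule Gtend[OF _ xsb tendsto_const])
  qed
  have "\<forall>\<^sub>F m in sequentially. (\<Sum>t\<in>T. WC (sb m) t *\<^sub>R G t (xs (sb m)) yb) + OV (sb m) = \<gamma> (sb m)"
    using gsb by eventually_elim (rule WCOV(1)[symmetric])
  from Lim_transform_eventually[OF WClim this]
  have "(\<lambda>m. \<gamma> (sb m)) \<longlonglongrightarrow> (\<Sum>t\<in>T. Lc t *\<^sub>R G t xb yb) + 0" .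
  then have Leq: "(\<Sum>i\<in>I. Lc i *\<^sub>R G i xb yb) = (\<Sum>t\<in>T. Lc t *\<^sub>R G t xb yb)"
    using LIMSEQ_unique[OF gamlim] by simp
  have Lsq: "(\<Sum>i\<in>I. (Lc i)\<^sup>2) = 1"
  proof -
    have "(\<lambda>m. \<Sum>i\<in>I. (u (sb m) i)\<^sup>2) \<longlonglongrightarrow> (\<Sum>i\<in>I. (Lc i)\<^sup>2)"
      by (intro tendsto_sum tendsto_power ulim)
    moreover have "\<forall>\<^sub>F m in sequentially. 1 = (\<Sum>i\<in>I. (u (sb m) i)\<^sup>2)"
      using gsb by eventually_elim (rule usq[symmetric])
    then have "(\<lambda>m. \<Sum>i\<in>I. (u (sb m) i)\<^sup>2) \<longlonglongrightarrow> 1"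
      by (rule Lim_transform_eventually[OF tendsto_const])
    ultimately show ?thesis using LIMSEQ_unique by blast
  qed
  have Lnn: "Lc i \<ge> 0" if "i \<in> I" for i
    using ulim[OF that] by (rule tendsto_lowerbound) (use unn in auto)
  define V where "V = {i\<in>I. Lc i \<noteq> 0}"
  have VI: "V \<subseteq> I" unfolding V_def by blast
  have finV: "finite V" using VI finI finite_subset by blast
  have Vpos: "Lc i > 0" if "i \<in> V" for i using Lnn[of i] that unfolding V_def by force
  have ev_gpos: "\<forall>\<^sub>F m in sequentially. gg i (sb m) (z (sb m)) > 0" if iV: "i \<in> V" for i
  proof -
    have iI: "i \<in> I" using iV VI by blast
    have "\<forall>\<^sub>F m in sequentially. u (sb m) i > 0"
      using ulim[OF iI] Vpos[OF iV] by (rule order_tendstoD)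
    then show ?thesis
    proof eventually_elim
      case (elim m)
      then have "max (gg i (sb m) (z (sb m))) 0 \<noteq> 0" unfolding u_def by auto
      then show ?case by (simp add: max_def split: if_splits)
    qed
  qed
  have Vact: "V \<subseteq> {0} \<union> {i\<in>{1..l}. h i xb yb = 0}"
  proof
    fix i assume iV: "i \<in> V"
    show "i \<in> {0} \<union> {i\<in>{1..l}. h i xb yb = 0}"
    proof (cases "i = 0")
      case False
      have i1: "i \<in> {1..l}" using I1[OF _ False] iV VI by blast
      have "(\<lambda>m. h i (xs (sb m)) (z (sb m))) \<longlonglongrightarrow> h i xb yb"
        by (rule htend[OF _ xsb zsb]) (use i1 lp in auto)
      moreover have "\<forall>\<^sub>F m in sequentially. 0 \<le> h i (xs (sb m)) (z (sb m))"
        using ev_gpos[OF iV] by eventually_elim (use False in \<open>simp add: gg_def\<close>)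
      ultimately have "0 \<le> h i xb yb" by (rule tendsto_lowerbound) simp
      moreover have "h i xb yb \<le> 0" using ybG i1 unfolding Gamma_def by simp
      ultimately show ?thesis using i1 by simp
    qed simp
  qed
  have Vne: "\<exists>i\<in>V. Lc i \<noteq> 0"
  proof (rule ccontr)
    assume "\<not> (\<exists>i\<in>V. Lc i \<noteq> 0)"
    then have "\<forall>i\<in>I. Lc i = 0" unfolding V_def by blast
    then have "(\<Sum>i\<in>I. (Lc i)\<^sup>2) = 0" by simp
    then show False using Lsq by simp
  qed
  have VT: "V \<inter> T = {}" using VI TJ IJ by blast
  have pd: "pos_lin_dep (\<lambda>i. G i xb yb) V (\<lambda>i. G i xb yb) T"
  proof (rule pos_lin_depI[of V Lc T "\<lambda>t. - Lc t"])
    show "\<forall>i\<in>V. 0 \<le> Lc i" using Vpos by (simp add: less_imp_le)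
    show "(\<exists>i\<in>V. Lc i \<noteq> 0) \<or> (\<exists>i\<in>T. - Lc i \<noteq> 0)" using Vne by blast
    have "(\<Sum>i\<in>V. Lc i *\<^sub>R G i xb yb) = (\<Sum>i\<in>I. Lc i *\<^sub>R G i xb yb)"
      by (rule sum.mono_neutral_left[OF finI VI]) (auto simp: V_def)
    moreover have "(\<Sum>i\<in>T. (- Lc i) *\<^sub>R G i xb yb) = - (\<Sum>i\<in>T. Lc i *\<^sub>R G i xb yb)"
      by (simp add: sum_negf)
    ultimately show "(\<Sum>i\<in>V. Lc i *\<^sub>R G i xb yb) + (\<Sum>i\<in>T. (- Lc i) *\<^sub>R G i xb yb) = 0"
      using Leq by simp
  qed
  obtain K \<alpha> \<beta> where KV: "K \<subseteq> V" and Kne: "K \<noteq> {}" and apos: "\<forall>i\<in>K. \<alpha> i > 0"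
    and sum0: "(\<Sum>i\<in>K. \<alpha> i *\<^sub>R G i xb yb) + (\<Sum>i\<in>T. \<beta> i *\<^sub>R G i xb yb) = 0"
    and indK: "\<forall>k\<in>K. \<not> fam_lin_dep (\<lambda>i. G i xb yb) ((K - {k}) \<union> T)"
    using min_posdep[OF finV finT VT indT pd] by blast
  have finK: "finite K" using KV finV finite_subset by blast
  have KT: "K \<inter> T = {}" using KV VT by blast
  obtain k0 where k0: "k0 \<in> K" using Kne by blast
  have pdK: "pos_lin_dep (\<lambda>i. G i xb yb) K (\<lambda>i. G i xb yb) T"
    by (rule pos_lin_depI[of K \<alpha> T \<beta>]) (use apos k0 sum0 in \<open>auto intro: less_imp_le\<close>)
  have depK: "\<forall>(x, y) \<in> U \<inter> (\<Omega> \<times> UNIV). fam_lin_dep (\<lambda>i. G i x y) (K \<union> T)"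
    using RC3 KV Vact pdK by blast
  have ev_U2: "\<forall>\<^sub>F m in sequentially. (xs (sb m), z (sb m)) \<in> U"
    using tendsto_Pair[OF xsb zsb] U by (rule topological_tendstoD)
  have ev_dep: "\<forall>\<^sub>F m in sequentially. fam_lin_dep ((\<lambda>m i. G i (xs (sb m)) (z (sb m))) m) (K \<union> T)"
    using ev_U2 by eventually_elim (use depK xsO in auto)
  have conv: "\<forall>i\<in>K \<union> T. (\<lambda>m. (\<lambda>m i. G i (xs (sb m)) (z (sb m))) m i) \<longlonglongrightarrow> (\<lambda>i. G i xb yb) i"
  proof
    fix i assume "i \<in> K \<union> T"
    then have "i \<in> {0..p}" using KV VI Ip TJ unfolding J_def by auto
    then show "(\<lambda>m. (\<lambda>m i. G i (xs (sb m)) (z (sb m))) m i) \<longlonglongrightarrow> (\<lambda>i. G i xb yb) i"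
      unfolding G_def by (simp add: Gtend[OF _ xsb zsb])
  qed
  have Pev: "\<forall>\<^sub>F m in sequentially. good (sb m) \<and> (\<forall>i\<in>K. gg i (sb m) (z (sb m)) > 0)"
  proof -
    have "\<forall>\<^sub>F m in sequentially. \<forall>i\<in>K. gg i (sb m) (z (sb m)) > 0"
      by (rule eventually_ball_finite[OF finK]) (use ev_gpos KV in blast)
    then show ?thesis using gsb by eventually_elim blast
  qed
  have indK': "\<forall>k\<in>K. \<not> fam_lin_dep (\<lambda>i. G i xb yb) ((K - {k}) \<union> T)" using indK .
  obtain m c where Pm: "good (sb m) \<and> (\<forall>i\<in>K. gg i (sb m) (z (sb m)) > 0)"
    and cpos: "\<forall>i\<in>K. c i > 0"
    and csum: "(\<Sum>i\<in>K \<union> T. c i *\<^sub>R G i (xs (sb m)) (z (sb m))) = 0"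
    using sign_lemma[where w="\<lambda>m i. G i (xs (sb m)) (z (sb m))" and wb="\<lambda>i. G i xb yb",
        OF finK finT KT k0 apos sum0 indK' conv ev_dep Pev] by blast
  define n where "n = sb m"
  define p0 where "p0 = ws n"
  define zz where "zz = z n"
  have ggpos: "\<forall>i\<in>K. gg i n zz > 0" using Pm unfolding n_def zz_def by blast
  have ineq: "gg i n zz + G i (xs n) zz \<bullet> (p0 - zz) \<le> gg i n p0" if iK: "i \<in> K" for i
  proof -
    have iI: "i \<in> I" using iK KV VI by blast
    have cv: "convex_on UNIV (gg i n)"
    proof (cases "i = 0")
      case True
      have "convex_on UNIV (\<lambda>y. f (xs n) y + (- fn n))"
        by (rule convex_on_add[OF _ convex_on_const[THEN iffD2, OF convex_UNIV]]) (use A1f in simp)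
      then show ?thesis using True unfolding gg_def by simp
    next
      case False
      then have "gg i n = h i (xs n)" unfolding gg_def by (simp add: fun_eq_iff)
      then show ?thesis using A1I I1[OF iI False] by simp
    qed
    show ?thesis using convex_grad_ineq[OF cv ggder[OF iI]] by simp
  qed
  have gp0: "gg i n p0 \<le> 0" if iK: "i \<in> K" for i
  proof (cases "i = 0")
    case True then show ?thesis unfolding gg_def p0_def fn_def by simp
  next
    case False
    have "i \<in> {1..l}" using I1[OF _ False] iK KV VI by blast
    then show ?thesis using wsG[of n] False unfolding gg_def p0_def Gamma_def by simp
  qed
  have Tzero: "G t (xs n) zz \<bullet> (p0 - zz) = 0" if tT: "t \<in> T" for t
  proof -
    have tt: "t \<in> {l+1..p}" using tT TJ unfolding J_def by blast
    have "h t (xs n) p0 = h t (xs n) zz + G t (xs n) zz \<bullet> (p0 - zz)"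
      using aff_h[OF tt] unfolding G_def by blast
    moreover have "h t (xs n) p0 = 0" using wsG[of n] tt unfolding p0_def Gamma_def by simp
    moreover have "h t (xs n) zz = 0" using zL[of n] tt unfolding zz_def L_def J_def by simp
    ultimately show ?thesis by simp
  qed
  have "0 = (\<Sum>i\<in>K \<union> T. c i *\<^sub>R G i (xs n) zz) \<bullet> (p0 - zz)" using csum unfolding n_def zz_def by simp
  also have "\<dots> = (\<Sum>i\<in>K \<union> T. c i * (G i (xs n) zz \<bullet> (p0 - zz)))" by (simp add: inner_sum_left)
  also have "\<dots> = (\<Sum>i\<in>K. c i * (G i (xs n) zz \<bullet> (p0 - zz))) + (\<Sum>i\<in>T. c i * (G i (xs n) zz \<bullet> (p0 - zz)))"
    by (rule sum.union_disjoint[OF finK finT KT])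
  also have "(\<Sum>i\<in>T. c i * (G i (xs n) zz \<bullet> (p0 - zz))) = 0" using Tzero by simp
  finally have Kz: "(\<Sum>i\<in>K. c i * (G i (xs n) zz \<bullet> (p0 - zz))) = 0" by simp
  have "(\<Sum>i\<in>K. c i * gg i n zz) + (\<Sum>i\<in>K. c i * (G i (xs n) zz \<bullet> (p0 - zz))) \<le> (\<Sum>i\<in>K. c i * gg i n p0)"
    unfolding sum.distrib[symmetric]
  proof (rule sum_mono)
    fix i assume iK: "i \<in> K"
    have "c i * (gg i n zz + G i (xs n) zz \<bullet> (p0 - zz)) \<le> c i * gg i n p0"
      using ineq[OF iK] cpos iK by (intro mult_left_mono) auto
    then show "c i * gg i n zz + c i * (G i (xs n) zz \<bullet> (p0 - zz)) \<le> c i * gg i n p0"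
      by (simp add: distrib_left)
  qed
  then have A: "(\<Sum>i\<in>K. c i * gg i n zz) \<le> (\<Sum>i\<in>K. c i * gg i n p0)" using Kz by simp
  have B: "(\<Sum>i\<in>K. c i * gg i n zz) > 0"
    by (rule sum_pos[OF finK Kne]) (use cpos ggpos in simp)
  have C: "(\<Sum>i\<in>K. c i * gg i n p0) \<le> 0"
    by (rule sum_nonpos) (use cpos gp0 in \<open>simp add: mult_nonneg_nonpos less_imp_le\<close>)
  show False using A B C by simp
qed


end



theorem corollary4p15:
  fixes f :: "'a::euclidean_space \<Rightarrow> 'b::euclidean_space \<Rightarrow> real"
    and h :: "nat \<Rightarrow> 'a \<Rightarrow> 'b \<Rightarrow> real"
    and l p :: nat and xb :: 'a
  assumes lp: "l \<le> p"
    and C1f: "C1_fun (\<lambda>z. f (fst z) (snd z))"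
    and C1h: "\<forall>i\<in>{1..p}. C1_fun (\<lambda>z. h i (fst z) (snd z))"
    and xb_dom: "xb \<in> dom_map (Gamma h l p)"
    and A1f: "\<forall>x. convex_on UNIV (f x)"
    and A1I: "\<forall>x. \<forall>i\<in>{1..l}. convex_on UNIV (h i x)"
    and A1J: "\<forall>x. \<forall>i\<in>{l+1..p}. \<exists>a b. \<forall>y. h i x y = a \<bullet> y + b"
    and A2: "locally_bounded_at (Gamma h l p) xb"
    and RC: "\<forall>yb\<in>Sol f h l p xb. RCPLD_S f h l p (dom_map (Gamma h l p)) xb yb"
  shows "lsc_wrt (Sol f h l p) xb (dom_map (Sol f h l p))"
proof -
  interpret S: setting f h l p xb
    by (rule setting.intro) (use assms in auto)
  show ?thesis unfolding lsc_wrt_def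
  proof (intro allI impI)
    fix W assume W: "open W \<and> Sol f h l p xb \<inter> W \<noteq> {}"
    then obtain yb where yb: "yb \<in> Sol f h l p xb" "yb \<in> W" by blast
    obtain \<delta> where dpos: "\<delta> > 0" and dW: "ball yb \<delta> \<subseteq> W"
      using W yb(2) open_contains_ball by blast
    obtain B V0 where B: "bounded B" and V0: "open V0" "xb \<in> V0" and GB: "\<forall>x\<in>V0. Gamma h l p x \<subseteq> B"
      using A2 unfolding locally_bounded_at_def by blast
    show "\<exists>V. open V \<and> xb \<in> V \<and> (\<forall>x\<in>V \<inter> dom_map (Sol f h l p). Sol f h l p x \<inter> W \<noteq> {})"
    proof (rule ccontr)
      assume H: "\<not> ?thesis"
      have ex: "\<forall>n. \<exists>x. x \<in> ball xb (1 / real (Suc n)) \<inter> V0 \<and> x \<in> dom_map (Sol f h l p) \<and> Sol f h l p x \<inter> W = {}"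
      proof
        fix n
        have "open (ball xb (1 / real (Suc n)) \<inter> V0)" using V0 by auto
        moreover have "xb \<in> ball xb (1 / real (Suc n)) \<inter> V0" using V0 by simp
        ultimately show "\<exists>x. x \<in> ball xb (1 / real (Suc n)) \<inter> V0 \<and> x \<in> dom_map (Sol f h l p) \<and> Sol f h l p x \<inter> W = {}"
          using H by blast
      qed
      obtain xs where xs: "\<forall>n. xs n \<in> ball xb (1 / real (Suc n)) \<inter> V0 \<and> xs n \<in> dom_map (Sol f h l p) \<and> Sol f h l p (xs n) \<inter> W = {}"
        using choice[OF ex] by (elim exE) (rule that)
      have xslim: "xs \<longlonglongrightarrow> xb"
      proof -
        have "(\<lambda>n. dist (xs n) xb) \<longlonglongrightarrow> 0"
        proof (rule real_tendsto_sandwich[of "\<lambda>n. 0" _ _ "\<lambda>n. 1 / real (Suc n)"])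
          show "\<forall>\<^sub>F n in sequentially. 0 \<le> dist (xs n) xb" by simp
          have "dist (xs n) xb \<le> 1 / real (Suc n)" for n
            using xs by (simp add: dist_commute less_imp_le)
          then show "\<forall>\<^sub>F n in sequentially. dist (xs n) xb \<le> 1 / real (Suc n)"
            by (intro always_eventually allI)
        qed (simp, rule inv_Suc_tendsto)
        then show ?thesis by (subst tendsto_dist_iff)
      qed
      have exw: "\<forall>n. \<exists>w. w \<in> Sol f h l p (xs n)" using xs unfolding dom_map_def by blast
      obtain ws where ws: "\<forall>n. ws n \<in> Sol f h l p (xs n)"
        using choice[OF exw] by (elim exE) (rule that)
      have "bounded (range ws)"
      proof (rule bounded_subset[OF B])
        show "range ws \<subseteq> B"
        proof
          fix w assume "w \<in> range ws"
          then obtain n where n: "w = ws n" by blast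
          have "ws n \<in> Gamma h l p (xs n)" using ws unfolding Sol_def by blast
          moreover have "xs n \<in> V0" using xs by blast
          ultimately show "w \<in> B" using GB n by blast
        qed
      qed
      then obtain wb s where s: "strict_mono s" and wsl: "(ws \<circ> s) \<longlonglongrightarrow> wb"
        using bounded_imp_convergent_subsequence by blast
      show False
      proof (rule S.core[of yb "xs \<circ> s" "ws \<circ> s" wb \<delta>])
        show "yb \<in> Sol f h l p xb" by (rule yb(1))
        show "(xs \<circ> s) \<longlonglongrightarrow> xb" by (rule LIMSEQ_subseq_LIMSEQ[OF xslim s])
        show "(ws \<circ> s) \<longlonglongrightarrow> wb" by (rule wsl)
        show "\<forall>n. (ws \<circ> s) n \<in> Sol f h l p ((xs \<circ> s) n)" using ws by simp
        show "0 < \<delta>" by (rule dpos)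
        show "\<forall>n. Sol f h l p ((xs \<circ> s) n) \<inter> ball yb \<delta> = {}" using xs dW by auto
      qed
    qed
  qed
qed



end
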